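(* Let $\mathcal{A}$ and $\mathcal{B}$ be Boolean algebras. Then the Fremlin (Archimedean Riesz space) tensor product $\mathcal{C}(\mathcal{A})\bar{\otimes}\mathcal{C}(\mathcal{B})$ is Riesz isomorphic to $\mathcal{C}(\mathcal{A}\otimes\mathcal{B})$, where $\mathcal{A}\otimes\mathcal{B}$ denotes the free product of $\mathcal{A}$ and $\mathcal{B}$.
   Context: Place functions: for a Riesz space $E$ and $e\in E^+$, $x\in E^+$ is a component of $e$ if $x\wedge(e-x)=0$; the set $\mathcal{C}(e)$ of components is a Boolean algebra. For a Boolean algebra $\mathcal{A}$ there is an Archimedean Riesz space $E$ with strong unit $e$ and a Boolean isomorphism $\chi\colon\mathcal{A}\to\mathcal{C}(e)$ such that $E$ is the linear span of $\mathcal{C}(e)$; this is unique up to isomorphism and $E$ is denoted $\mathcal{C}(\mathcal{A})$ (Carathéodory space of place functions). Free product: if $Z_1,Z_2$ are the Stone spaces of $\mathcal{A},\mathcal{B}$ (nonzero ring homomorphisms to $\mathbb{Z}_2$, with $a\mapsto\hat a=\{z: z(a)=1\}$ the Stone representation), then $\mathcal{A}\otimes\mathcal{B}$ is the Boolean algebra of clopen subsets of $Z_1\times Z_2$ (product topology), with canonical Boolean homomorphisms $\epsilon_A(a)=\hat a\times Z_2$, $\epsilon_B(b)=Z_1\times\hat b$. Fremlin tensor product: for Archimedean Riesz spaces $E,F$, $E\bar{\otimes}F$ is the Archimedean Riesz space $G$ together with a Riesz bimorphism $\otimes\colon E\times F\to G$ such that for every Archimedean Riesz space $H$ and Riesz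 bimorphism $\psi\colon E\times F\to H$ there is a unique Riesz homomorphism $T\colon G\to H$ with $T\circ\otimes=\psi$. *)

theory Defs
  imports "HOL-Analysis.Analysis"
begin

class riesz_space = ordered_real_vector + lattice

class archimedean_riesz_space = riesz_space +
  assumes archimedean: "0 \<le> x \<Longrightarrow> (\<And>n::nat. real n *\<^sub>R x \<le> y) \<Longrightarrow> x = 0"

definition strong_unit :: "'a::riesz_space \<Rightarrow> bool" where
  "strong_unit e \<longleftrightarrow> 0 \<le> e \<and> (\<forall>x. \<exists>c::real. sup x (- x) \<le> c *\<^sub>R e)"

definition components :: "'a::riesz_space \<Rightarrow> 'a set" where
  "components e = {x. 0 \<le> x \<and> inf x (e - x) = 0}"

definition riesz_hom :: "('a::riesz_space \<Rightarrow> 'b::riesz_space) \<Rightarrow> bool" where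
  "riesz_hom T \<longleftrightarrow> linear T \<and> (\<forall>x y. T (sup x y) = sup (T x) (T y))
                  \<and> (\<forall>x y. T (inf x y) = inf (T x) (T y))"

definition riesz_iso :: "('a::riesz_space \<Rightarrow> 'b::riesz_space) \<Rightarrow> bool" where
  "riesz_iso T \<longleftrightarrow> riesz_hom T \<and> bij T"

definition riesz_bimorphism ::
    "('a::riesz_space \<Rightarrow> 'b::riesz_space \<Rightarrow> 'c::riesz_space) \<Rightarrow> bool" where
  "riesz_bimorphism \<psi> \<longleftrightarrow> (\<forall>x. linear (\<psi> x)) \<and> (\<forall>y. linear (\<lambda>x. \<psi> x y))
     \<and> (\<forall>x. 0 \<le> x \<longrightarrow> riesz_hom (\<psi> x)) \<and> (\<forall>y. 0 \<le> y \<longrightarrow> riesz_hom (\<lambda>x. \<psi> x y))"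

text \<open>The universal property of the Fremlin tensor product (G, tp) of E and F, tested against
  all Archimedean Riesz spaces H whose carrier is the type 'h.\<close>
definition fremlin_universal ::
    "'h::archimedean_riesz_space itself \<Rightarrow>
     ('e::archimedean_riesz_space \<Rightarrow> 'f::archimedean_riesz_space \<Rightarrow> 'g::archimedean_riesz_space)
     \<Rightarrow> bool" where
  "fremlin_universal (_::'h itself) tp \<longleftrightarrow>
     (\<forall>\<psi> :: 'e \<Rightarrow> 'f \<Rightarrow> 'h. riesz_bimorphism \<psi> \<longrightarrow>
        (\<exists>!T :: 'g \<Rightarrow> 'h. riesz_hom T \<and> (\<forall>x y. T (tp x y) = \<psi> x y)))"

definition bool_iso ::
    "'b set \<Rightarrow> ('b \<Rightarrow> 'b \<Rightarrow> 'b) \<Rightarrow> ('b \<Rightarrow> 'b \<Rightarrow> 'b) \<Rightarrow> ('b \<Rightarrow> 'b) \<Rightarrow> 'b \<Rightarrow> 'b \<Rightarrow>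
     'c set \<Rightarrow> ('c \<Rightarrow> 'c \<Rightarrow> 'c) \<Rightarrow> ('c \<Rightarrow> 'c \<Rightarrow> 'c) \<Rightarrow> ('c \<Rightarrow> 'c) \<Rightarrow> 'c \<Rightarrow> 'c \<Rightarrow>
     ('b \<Rightarrow> 'c) \<Rightarrow> bool" where
  "bool_iso A jA mA cA zA oA C jC mC cC zC oC chi \<longleftrightarrow>
     bij_betw chi A C
     \<and> (\<forall>a\<in>A. \<forall>b\<in>A. chi (jA a b) = jC (chi a) (chi b) \<and> chi (mA a b) = mC (chi a) (chi b))
     \<and> (\<forall>a\<in>A. chi (cA a) = cC (chi a)) \<and> chi zA = zC \<and> chi oA = oC"

text \<open>The Archimedean Riesz space of type 'e is (a copy of) the Caratheodory space C(A) of place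
  functions of the Boolean algebra A = (carrier, join, meet, complement, 0, 1): it has a strong unit e
  and a Boolean isomorphism from A onto the components C(e), and it is the linear span of C(e).\<close>
definition is_caratheodory_space ::
    "'e::archimedean_riesz_space itself \<Rightarrow>
     'b set \<Rightarrow> ('b \<Rightarrow> 'b \<Rightarrow> 'b) \<Rightarrow> ('b \<Rightarrow> 'b \<Rightarrow> 'b) \<Rightarrow> ('b \<Rightarrow> 'b) \<Rightarrow> 'b \<Rightarrow> 'b \<Rightarrow> bool" where
  "is_caratheodory_space (_::'e itself) A jA mA cA zA oA \<longleftrightarrow>
     (\<exists>(e::'e) chi. strong_unit e
        \<and> bool_iso A jA mA cA zA oA (components e) sup inf (\<lambda>x. e - x) 0 e chi
        \<and> span (components e) = UNIV)"

abbreviation is_caratheodory_space_of_type ::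
    "'e::archimedean_riesz_space itself \<Rightarrow> 'a::boolean_algebra itself \<Rightarrow> bool" where
  "is_caratheodory_space_of_type E (_::'a itself) \<equiv>
     is_caratheodory_space E (UNIV::'a set) sup inf uminus bot top"

text \<open>Stone space: nonzero ring homomorphisms to Z_2 (ring product = meet,
  ring sum = symmetric difference; Z_2 represented by bool with sum = xor, product = and).\<close>
definition stone_space :: "('a::boolean_algebra \<Rightarrow> bool) set" where
  "stone_space = {z. (\<forall>a b. z (inf a b) = (z a \<and> z b))
                    \<and> (\<forall>a b. z (sup (inf a (- b)) (inf (- a) b)) = (z a \<noteq> z b))
                    \<and> (\<exists>a. z a)}"

definition stone_hat :: "'a::boolean_algebra \<Rightarrow> ('a \<Rightarrow> bool) set" where
  "stone_hat a = {z \<in> stone_space. z a}"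

definition stone_topology :: "('a::boolean_algebra \<Rightarrow> bool) topology" where
  "stone_topology = subtopology (topology_generated_by (range stone_hat)) stone_space"

definition free_prod_topology ::
    "('a::boolean_algebra itself) \<Rightarrow> ('b::boolean_algebra itself) \<Rightarrow>
     (('a \<Rightarrow> bool) \<times> ('b \<Rightarrow> bool)) topology" where
  "free_prod_topology _ _ = prod_topology stone_topology stone_topology"

definition free_product ::
    "('a::boolean_algebra itself) \<Rightarrow> ('b::boolean_algebra itself) \<Rightarrow>
     (('a \<Rightarrow> bool) \<times> ('b \<Rightarrow> bool)) set set" where
  "free_product A B = {S. openin (free_prod_topology A B) S \<and> closedin (free_prod_topology A B) S}"

definition is_caratheodory_space_of_free_product ::
    "'h::archimedean_riesz_space itself \<Rightarrow> 'a::boolean_algebra itself \<Rightarrow> 'b::boolean_algebra itself \<Rightarrow> bool" where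
  "is_caratheodory_space_of_free_product H A B \<longleftrightarrow>
     is_caratheodory_space H (free_product A B) (\<union>) (\<inter>)
       (\<lambda>S. topspace (free_prod_topology A B) - S) {} (topspace (free_prod_topology A B))"

end

theory Submission
  imports Defs "HOL-Library.Lattice_Algebras"
begin

instance riesz_space \<subseteq> lattice_ab_group_add ..

definition rabs :: "'a::riesz_space \<Rightarrow> 'a" where "rabs x = sup x (-x)"

lemma scaleR_sup:
  fixes x y :: "'a::riesz_space" assumes "0 \<le> c"
  shows "c *\<^sub>R sup x y = sup (c *\<^sub>R x) (c *\<^sub>R y)"
proof (cases "c = 0")
  case True thus ?thesis by simp
next
  case False
  with assms have c: "c > 0" by simp
  show ?thesis
  proof (rule antisym)
    have "sup x y \<le> inverse c *\<^sub>R sup (c *\<^sub>R x) (c *\<^sub>R y)"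
    proof (rule sup_least)
      have "x = inverse c *\<^sub>R (c *\<^sub>R x)" using c by simp
      also have "\<dots> \<le> inverse c *\<^sub>R sup (c *\<^sub>R x) (c *\<^sub>R y)"
        by (rule scaleR_left_mono) (use c in auto)
      finally show "x \<le> inverse c *\<^sub>R sup (c *\<^sub>R x) (c *\<^sub>R y)" .
      have "y = inverse c *\<^sub>R (c *\<^sub>R y)" using c by simp
      also have "\<dots> \<le> inverse c *\<^sub>R sup (c *\<^sub>R x) (c *\<^sub>R y)"
        by (rule scaleR_left_mono) (use c in auto)
      finally show "y \<le> inverse c *\<^sub>R sup (c *\<^sub>R x) (c *\<^sub>R y)" .
    qed
    then have "c *\<^sub>R sup x y \<le> c *\<^sub>R (inverse c *\<^sub>R sup (c *\<^sub>R x) (c *\<^sub>R y))"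
      by (rule scaleR_left_mono) (use c in auto)
    thus "c *\<^sub>R sup x y \<le> sup (c *\<^sub>R x) (c *\<^sub>R y)" using c by simp
  next
    show "sup (c *\<^sub>R x) (c *\<^sub>R y) \<le> c *\<^sub>R sup x y"
      by (intro sup_least scaleR_left_mono) (auto simp: assms)
  qed
qed

lemma scaleR_inf:
  fixes x y :: "'a::riesz_space" assumes "0 \<le> c"
  shows "c *\<^sub>R inf x y = inf (c *\<^sub>R x) (c *\<^sub>R y)"
proof -
  have "c *\<^sub>R inf x y = c *\<^sub>R (- sup (-x) (-y))" by (subst inf_eq_neg_sup) (rule refl)
  also have "\<dots> = - sup (- (c *\<^sub>R x)) (- (c *\<^sub>R y))"
    using scaleR_sup[OF assms, of "-x" "-y"] by (simp only: scaleR_minus_right)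
  also have "\<dots> = inf (c *\<^sub>R x) (c *\<^sub>R y)" by (rule inf_eq_neg_sup[symmetric])
  finally show ?thesis .
qed

lemma rabs_nonneg: "0 \<le> rabs (x::'a::riesz_space)"
proof -
  have "x + (-x) \<le> rabs x + rabs x" unfolding rabs_def by (intro add_mono) auto
  hence "0 \<le> (2::real) *\<^sub>R rabs x" by (simp add: scaleR_2)
  thus ?thesis using scaleR_nonneg_nonneg[of "1/2" "(2::real) *\<^sub>R rabs x"] by simp
qed

lemma rabs_of_nonneg: "0 \<le> (x::'a::riesz_space) \<Longrightarrow> rabs x = x"
  unfolding rabs_def by (rule sup_absorb1) (meson neg_le_0_iff_le order_trans)

lemma rabs_uminus: "rabs (- (x::'a::riesz_space)) = rabs x"
  unfolding rabs_def by (simp add: sup_commute)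

lemma rabs_scaleR: "rabs (c *\<^sub>R (x::'a::riesz_space)) = \<bar>c\<bar> *\<^sub>R rabs x"
proof (cases "c \<ge> 0")
  case True thus ?thesis unfolding rabs_def using scaleR_sup[OF True, of x "-x"] by simp
next
  case False
  hence "c *\<^sub>R x = - (\<bar>c\<bar> *\<^sub>R x)" by simp
  hence "rabs (c *\<^sub>R x) = rabs (\<bar>c\<bar> *\<^sub>R x)" by (simp add: rabs_uminus)
  also have "\<dots> = \<bar>c\<bar> *\<^sub>R rabs x" unfolding rabs_def using scaleR_sup[of "\<bar>c\<bar>" x "-x"] by simp
  finally show ?thesis .
qed

lemma sup_via_rabs:
  fixes x y :: "'a::riesz_space"
  shows "sup x y = (1/2::real) *\<^sub>R (x + y + rabs (x - y))"
proof -
  have "x + y + rabs (x - y) = sup (x + y + (x - y)) (x + y + (y - x))"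
    unfolding rabs_def by (simp add: add_sup_distrib_left)
  also have "\<dots> = sup ((2::real) *\<^sub>R x) ((2::real) *\<^sub>R y)" by (simp add: scaleR_2 algebra_simps)
  also have "\<dots> = (2::real) *\<^sub>R sup x y" by (simp add: scaleR_sup)
  finally show ?thesis by simp
qed

lemma inf_via_sup: "inf x y = x + y - sup x (y::'a::riesz_space)"
  using add_eq_inf_sup[of x y] by (metis add_diff_cancel_left')

lemma riesz_homI:
  assumes "linear T" and "\<And>x. T (rabs x) = rabs (T x)"
  shows "riesz_hom T"
proof -
  have s: "T (sup x y) = sup (T x) (T y)" for x y
  proof -
    have "T (sup x y) = T ((1/2::real) *\<^sub>R (x + y + rabs (x - y)))" by (subst sup_via_rabs) (rule refl)
    also have "\<dots> = (1/2::real) *\<^sub>R (T x + T y + rabs (T x - T y))"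
      by (simp only: linear_add[OF assms(1)] linear_scale[OF assms(1)] linear_diff[OF assms(1)] assms(2))
    also have "\<dots> = sup (T x) (T y)" by (rule sup_via_rabs[symmetric])
    finally show ?thesis .
  qed
  have i: "T (inf x y) = inf (T x) (T y)" for x y
    by (simp only: inf_via_sup s linear_add[OF assms(1)] linear_diff[OF assms(1)])
  show ?thesis unfolding riesz_hom_def using assms(1) s i by blast
qed

lemma riesz_hom_linear: "riesz_hom T \<Longrightarrow> linear T"
  by (simp add: riesz_hom_def)

lemma riesz_hom_sup: "riesz_hom T \<Longrightarrow> T (sup x y) = sup (T x) (T y)"
  by (simp add: riesz_hom_def)

lemma riesz_hom_inf: "riesz_hom T \<Longrightarrow> T (inf x y) = inf (T x) (T y)"
  by (simp add: riesz_hom_def)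

lemma riesz_hom_mono: "riesz_hom T \<Longrightarrow> x \<le> y \<Longrightarrow> T x \<le> T y"
  by (metis riesz_hom_sup sup.absorb_iff2)

lemma riesz_hom_pos: "riesz_hom T \<Longrightarrow> 0 \<le> x \<Longrightarrow> 0 \<le> T x"
  using riesz_hom_mono[of T 0 x] linear_0[OF riesz_hom_linear] by metis

lemma riesz_hom_rabs: "riesz_hom T \<Longrightarrow> T (rabs x) = rabs (T x)"
  unfolding rabs_def by (simp add: riesz_hom_sup linear_neg[OF riesz_hom_linear])

lemma riesz_hom_comp: "riesz_hom S \<Longrightarrow> riesz_hom T \<Longrightarrow> riesz_hom (S \<circ> T)"
  unfolding riesz_hom_def by (auto intro: linear_compose)

lemma riesz_hom_id: "riesz_hom id"
  unfolding riesz_hom_def by (simp add: linear_id)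

lemma inf_add_le:
  fixes u v w :: "'a::riesz_space"
  assumes "0 \<le> u" "0 \<le> v" "0 \<le> w"
  shows "inf (u + v) w \<le> inf u w + inf v w"
proof -
  have "inf u w + inf v w = inf (u + inf v w) (w + inf v w)" by (rule add_inf_distrib_right)
  also have "\<dots> = inf (inf (u + v) (u + w)) (inf (w + v) (w + w))" by (simp only: add_inf_distrib_left)
  finally have "inf u w + inf v w = inf (inf (u + v) (u + w)) (inf (w + v) (w + w))" .
  moreover have "inf (u + v) w \<le> \<dots>"
    using assms by (intro le_infI) (auto intro: le_infI2 add_increasing add_increasing2)
  ultimately show ?thesis by simp
qed

lemma inf_scale_disj:
  fixes u v :: "'a::riesz_space"
  assumes "0 \<le> u" "0 \<le> v" "inf u v = 0" "0 \<le> a" "0 \<le> b"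
  shows "inf (a *\<^sub>R u) (b *\<^sub>R v) = 0"
proof (rule antisym)
  let ?m = "max a b"
  have "inf (a *\<^sub>R u) (b *\<^sub>R v) \<le> inf (?m *\<^sub>R u) (?m *\<^sub>R v)"
    using assms by (intro inf_mono scaleR_right_mono) auto
  also have "\<dots> = ?m *\<^sub>R inf u v" by (rule scaleR_inf[symmetric]) (use assms in auto)
  finally show "inf (a *\<^sub>R u) (b *\<^sub>R v) \<le> 0" using assms by simp
  show "0 \<le> inf (a *\<^sub>R u) (b *\<^sub>R v)" using assms by (simp add: scaleR_nonneg_nonneg)
qed

lemma inf_sum_disj:
  fixes u :: "'k \<Rightarrow> 'a::riesz_space"
  assumes "finite A" "\<And>i. i \<in> A \<Longrightarrow> 0 \<le> u i" "\<And>i. i \<in> A \<Longrightarrow> inf (u i) w = 0" "0 \<le> w"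
  shows "inf (\<Sum>i\<in>A. u i) w = 0"
  using assms
proof (induction A rule: finite_induct)
  case empty thus ?case by (simp add: inf_absorb1)
next
  case (insert i A)
  have "inf (u i + (\<Sum>i\<in>A. u i)) w \<le> inf (u i) w + inf (\<Sum>i\<in>A. u i) w"
    using insert by (intro inf_add_le sum_nonneg) auto
  also have "\<dots> = 0" using insert by simp
  finally have "inf (u i + (\<Sum>i\<in>A. u i)) w \<le> 0" .
  moreover have "0 \<le> inf (u i + (\<Sum>i\<in>A. u i)) w"
    using insert by (auto intro!: add_nonneg_nonneg sum_nonneg)
  ultimately have "inf (u i + (\<Sum>i\<in>A. u i)) w = 0" by (rule antisym)
  thus ?case using insert by simp
qed

lemma rabs_diff_disj:
  fixes P N :: "'a::riesz_space"
  assumes "0 \<le> P" "0 \<le> N" "inf P N = 0"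
  shows "rabs (P - N) = P + N"
proof -
  have "rabs (P - N) + (P + N) = sup ((P - N) + (P + N)) ((N - P) + (P + N))"
    unfolding rabs_def by (simp add: add_sup_distrib_right)
  also have "\<dots> = sup ((2::real) *\<^sub>R P) ((2::real) *\<^sub>R N)" by (simp add: scaleR_2 algebra_simps)
  also have "\<dots> = (2::real) *\<^sub>R sup P N" by (simp add: scaleR_sup)
  also have "sup P N = P + N" using add_eq_inf_sup[of P N] assms by simp
  finally show ?thesis by (simp add: scaleR_2)
qed

lemma rabs_sum_disj:
  fixes u :: "'k \<Rightarrow> 'a::riesz_space"
  assumes fin: "finite C" and pos: "\<And>k. k \<in> C \<Longrightarrow> 0 \<le> u k"
    and dis: "\<And>k k'. k \<in> C \<Longrightarrow> k' \<in> C \<Longrightarrow> k \<noteq> k' \<Longrightarrow> inf (u k) (u k') = 0"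
  shows "rabs (\<Sum>k\<in>C. g k *\<^sub>R u k) = (\<Sum>k\<in>C. \<bar>g k\<bar> *\<^sub>R u k)"
proof -
  define A where "A = {k\<in>C. 0 \<le> g k}"
  define B where "B = {k\<in>C. \<not> 0 \<le> g k}"
  have AB: "finite A" "finite B" "A \<inter> B = {}" "C = A \<union> B" "A \<subseteq> C" "B \<subseteq> C"
    using fin by (auto simp: A_def B_def)
  define P where "P = (\<Sum>k\<in>A. g k *\<^sub>R u k)"
  define N where "N = (\<Sum>k\<in>B. (- g k) *\<^sub>R u k)"
  have split: "(\<Sum>k\<in>C. h k) = (\<Sum>k\<in>A. h k) + (\<Sum>k\<in>B. h k)" for h :: "'k \<Rightarrow> 'a"
    by (subst AB(4)) (rule sum.union_disjoint; use AB in auto)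
  have NB: "N = - (\<Sum>k\<in>B. g k *\<^sub>R u k)" unfolding N_def by (simp add: sum_negf)
  have s1: "(\<Sum>k\<in>C. g k *\<^sub>R u k) = P - N"
    unfolding split NB P_def by simp
  have s2: "(\<Sum>k\<in>C. \<bar>g k\<bar> *\<^sub>R u k) = P + N"
    unfolding split P_def N_def
    by (intro arg_cong2[where f="(+)"] sum.cong) (auto simp: A_def B_def)
  have P0: "0 \<le> P" unfolding P_def using pos by (intro sum_nonneg scaleR_nonneg_nonneg) (auto simp: A_def)
  have negpos: "0 \<le> (- g k) *\<^sub>R u k" if "k \<in> B" for k
    by (rule scaleR_nonneg_nonneg) (use that pos in \<open>auto simp: B_def\<close>)
  have N0: "0 \<le> N" unfolding N_def using negpos by (intro sum_nonneg) auto
  have "inf P N = 0" unfolding P_def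
  proof (rule inf_sum_disj[OF AB(1) _ _ N0])
    fix i assume i: "i \<in> A"
    show "0 \<le> g i *\<^sub>R u i" using i pos by (auto simp: A_def intro: scaleR_nonneg_nonneg)
    have "inf N (g i *\<^sub>R u i) = 0" unfolding N_def
    proof (rule inf_sum_disj[OF AB(2)])
      fix j assume j: "j \<in> B"
      show "0 \<le> (- g j) *\<^sub>R u j" using j by (rule negpos)
      have "i \<noteq> j" using i j AB by auto
      thus "inf ((- g j) *\<^sub>R u j) (g i *\<^sub>R u i) = 0"
        using i j pos dis[of j i] by (intro inf_scale_disj) (auto simp: A_def B_def)
    next
      show "0 \<le> g i *\<^sub>R u i" using i pos by (auto simp: A_def intro: scaleR_nonneg_nonneg)
    qed
    thus "inf (g i *\<^sub>R u i) N = 0" by (simp add: inf_commute)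
  qed
  thus ?thesis using s1 s2 rabs_diff_disj[OF P0 N0] by simp
qed


section \<open>Atoms of finite families in a Boolean algebra\<close>

fun atm :: "'c::boolean_algebra list \<Rightarrow> bool list \<Rightarrow> 'c" where
  "atm (s # ss) (b # bs) = inf (if b then s else - s) (atm ss bs)"
| "atm _ _ = top"

definition vecs :: "nat \<Rightarrow> bool list set" where "vecs n = {bs. length bs = n}"

lemma finite_vecs [simp]: "finite (vecs n)"
  using finite_lists_length_eq[of "UNIV::bool set" n] by (simp add: vecs_def)

lemma vecs_Suc: "vecs (Suc n) = Cons True ` vecs n \<union> Cons False ` vecs n"
  unfolding vecs_def by (auto simp: length_Suc_conv)

lemma sum_vecs_Suc:
  "(\<Sum>bs\<in>vecs (Suc n). f bs) = (\<Sum>bs\<in>vecs n. f (True # bs) + f (False # bs))"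
proof -
  have "(\<Sum>bs\<in>vecs (Suc n). f bs) = (\<Sum>bs\<in>Cons True ` vecs n. f bs) + (\<Sum>bs\<in>Cons False ` vecs n. f bs)"
    unfolding vecs_Suc by (rule sum.union_disjoint) auto
  also have "\<dots> = (\<Sum>bs\<in>vecs n. f (True # bs)) + (\<Sum>bs\<in>vecs n. f (False # bs))"
    by (simp add: sum.reindex)
  finally show ?thesis by (simp add: sum.distrib)
qed

definition badd :: "('c::boolean_algebra \<Rightarrow> 'v::ab_group_add) \<Rightarrow> bool" where
  "badd \<mu> \<longleftrightarrow> (\<forall>x y. inf x y = bot \<longrightarrow> \<mu> (sup x y) = \<mu> x + \<mu> y)"

lemma badd_bot: "badd \<mu> \<Longrightarrow> \<mu> bot = 0"
  unfolding badd_def by (metis add_cancel_right_right inf_bot_left sup_bot_left)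

lemma badd_split: "badd \<mu> \<Longrightarrow> \<mu> b = \<mu> (inf s b) + \<mu> (inf (- s) b)"
proof -
  assume a: "badd \<mu>"
  have "b = sup (inf s b) (inf (- s) b)" by (simp add: inf_sup_distrib2[symmetric])
  moreover have "inf (inf s b) (inf (- s) b) = bot" by (simp add: inf_aci)
  ultimately show ?thesis using a unfolding badd_def by metis
qed

lemma atm_sum:
  assumes "badd \<mu>"
  shows "(\<Sum>bs\<in>vecs (length ss). \<mu> (inf (atm ss bs) b)) = \<mu> b"
proof (induction ss arbitrary: b)
  case Nil
  have "vecs 0 = {[]}" by (auto simp: vecs_def)
  thus ?case by simp
next
  case (Cons s ss)
  have "(\<Sum>bs\<in>vecs (length (s # ss)). \<mu> (inf (atm (s # ss) bs) b))
      = (\<Sum>bs\<in>vecs (length ss). \<mu> (inf (atm ss bs) (inf s b)) + \<mu> (inf (atm ss bs) (inf (- s) b)))"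
    by (simp add: sum_vecs_Suc inf_aci)
  also have "\<dots> = \<mu> (inf s b) + \<mu> (inf (- s) b)" by (simp add: sum.distrib Cons.IH)
  also have "\<dots> = \<mu> b" using badd_split[OF assms] by simp
  finally show ?case .
qed

lemma atm_decide:
  assumes "s \<in> set ss" "length bs = length ss"
  shows "inf (atm ss bs) s = atm ss bs \<or> inf (atm ss bs) s = bot"
  using assms
proof (induction ss arbitrary: bs)
  case Nil thus ?case by simp
next
  case (Cons t ts)
  then obtain b cs where bs: "bs = b # cs" "length cs = length ts" by (cases bs) auto
  show ?case
  proof (cases "s = t")
    case True thus ?thesis using bs by (cases b) (auto simp: inf_aci)
  next
    case False
    with Cons have "s \<in> set ts" by simp
    with Cons.IH bs have "inf (atm ts cs) s = atm ts cs \<or> inf (atm ts cs) s = bot" by simp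
    moreover have "inf (atm (t # ts) (b # cs)) s = inf (if b then t else -t) (inf (atm ts cs) s)"
      by (simp add: inf_aci)
    ultimately show ?thesis using bs by auto
  qed
qed

lemma atm_disj:
  assumes "length bs = length ss" "length cs = length ss" "bs \<noteq> cs"
  shows "inf (atm ss bs) (atm ss cs) = bot"
  using assms
proof (induction ss arbitrary: bs cs)
  case Nil thus ?case by simp
next
  case (Cons t ts)
  then obtain b bs' c cs' where bs: "bs = b # bs'" "cs = c # cs'" "length bs' = length ts" "length cs' = length ts"
    by (cases bs; cases cs) auto
  show ?case
  proof (cases "b = c")
    case True
    with Cons bs have "inf (atm ts bs') (atm ts cs') = bot" by auto
    thus ?thesis using bs by (simp add: inf_aci)
  next
    case False
    thus ?thesis using bs by (cases b; cases c) (auto simp: inf_aci)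
  qed
qed


definition coefm :: "'c::boolean_algebra list \<Rightarrow> 'c \<Rightarrow> bool list \<Rightarrow> real" where
  "coefm ss s bs = (if inf (atm ss bs) s = atm ss bs then 1 else 0)"

lemma badd_rep:
  fixes \<mu> :: "'c::boolean_algebra \<Rightarrow> 'v::real_vector"
  assumes "badd \<mu>" "s \<in> set ss"
  shows "\<mu> s = (\<Sum>bs\<in>vecs (length ss). coefm ss s bs *\<^sub>R \<mu> (atm ss bs))"
proof -
  have "\<mu> s = (\<Sum>bs\<in>vecs (length ss). \<mu> (inf (atm ss bs) s))" using atm_sum[OF assms(1)] by simp
  also have "\<dots> = (\<Sum>bs\<in>vecs (length ss). coefm ss s bs *\<^sub>R \<mu> (atm ss bs))"
  proof (rule sum.cong[OF refl])
    fix bs assume "bs \<in> vecs (length ss)"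
    hence l: "length bs = length ss" by (simp add: vecs_def)
    from atm_decide[OF assms(2) l] show "\<mu> (inf (atm ss bs) s) = coefm ss s bs *\<^sub>R \<mu> (atm ss bs)"
      using badd_bot[OF assms(1)] by (auto simp: coefm_def)
  qed
  finally show ?thesis .
qed

section \<open>Linear extensions from generating families\<close>

definition disj_fam :: "'k set \<Rightarrow> ('k \<Rightarrow> 'a::riesz_space) \<Rightarrow> bool" where
  "disj_fam C u \<longleftrightarrow> (\<forall>k\<in>C. 0 \<le> u k) \<and> (\<forall>k\<in>C. \<forall>k'\<in>C. k \<noteq> k' \<longrightarrow> inf (u k) (u k') = 0)"

lemma sum_refine:
  fixes \<rho> :: "'r \<Rightarrow> 'v::real_vector"
  assumes "finite F" "finite C" "\<And>r. r \<in> F \<Longrightarrow> \<rho> r = (\<Sum>k\<in>C. M r k *\<^sub>R u k)"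
  shows "(\<Sum>r\<in>F. f r *\<^sub>R \<rho> r) = (\<Sum>k\<in>C. (\<Sum>r\<in>F. f r * M r k) *\<^sub>R u k)"
proof -
  have "(\<Sum>r\<in>F. f r *\<^sub>R \<rho> r) = (\<Sum>r\<in>F. \<Sum>k\<in>C. (f r * M r k) *\<^sub>R u k)"
    using assms(3) by (simp add: scaleR_sum_right)
  also have "\<dots> = (\<Sum>k\<in>C. \<Sum>r\<in>F. (f r * M r k) *\<^sub>R u k)" by (rule sum.swap)
  also have "\<dots> = (\<Sum>k\<in>C. (\<Sum>r\<in>F. f r * M r k) *\<^sub>R u k)" by (simp add: scaleR_sum_left)
  finally show ?thesis .
qed

lemma gu_zero:
  fixes \<rho> :: "'r \<Rightarrow> 'v::riesz_space" and \<sigma> :: "'r \<Rightarrow> 'w::real_vector" and u :: "'k \<Rightarrow> 'v"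
  assumes F: "finite F" and C: "finite C" and dj: "disj_fam C u"
    and uv: "\<And>k. k \<in> C \<Longrightarrow> u k = 0 \<Longrightarrow> v k = 0"
    and r1: "\<And>r. r \<in> F \<Longrightarrow> \<rho> r = (\<Sum>k\<in>C. M r k *\<^sub>R u k)"
    and r2: "\<And>r. r \<in> F \<Longrightarrow> \<sigma> r = (\<Sum>k\<in>C. M r k *\<^sub>R v k)"
    and z: "(\<Sum>r\<in>F. f r *\<^sub>R \<rho> r) = 0"
  shows "(\<Sum>r\<in>F. f r *\<^sub>R \<sigma> r) = 0"
proof -
  define c where "c k = (\<Sum>r\<in>F. f r * M r k)" for k
  have "(\<Sum>k\<in>C. c k *\<^sub>R u k) = 0" using z sum_refine[OF F C r1, where f=f] by (simp add: c_def)
  hence "rabs (\<Sum>k\<in>C. c k *\<^sub>R u k) = 0" by (simp add: rabs_def)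
  hence "(\<Sum>k\<in>C. \<bar>c k\<bar> *\<^sub>R u k) = 0" using rabs_sum_disj[OF C, of u c] dj unfolding disj_fam_def by auto
  hence "\<forall>k\<in>C. \<bar>c k\<bar> *\<^sub>R u k = 0" using C dj
    by (subst sum_nonneg_eq_0_iff[symmetric]) (auto simp: disj_fam_def intro: scaleR_nonneg_nonneg)
  hence "\<forall>k\<in>C. c k *\<^sub>R v k = 0" using uv by auto
  hence z2: "(\<Sum>k\<in>C. c k *\<^sub>R v k) = 0" by (rule sum.neutral)
  have "(\<Sum>r\<in>F. f r *\<^sub>R \<sigma> r) = (\<Sum>k\<in>C. c k *\<^sub>R v k)"
    using sum_refine[OF F C r2, where f=f] by (simp add: c_def)
  with z2 show ?thesis by simp
qed

lemma span_range_rep: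
  fixes \<rho> :: "'r \<Rightarrow> 'v::real_vector"
  assumes "x \<in> span (range \<rho>)"
  shows "\<exists>F f. finite F \<and> x = (\<Sum>r\<in>F. f r *\<^sub>R \<rho> r)"
  using assms
proof (induction rule: span_induct_alt)
  case base show ?case by (intro exI[of _ "{}"]) auto
next
  case (step c y z)
  then obtain r where r: "y = \<rho> r" by auto
  from step obtain F f where F: "finite F" "z = (\<Sum>r\<in>F. f r *\<^sub>R \<rho> r)" by auto
  define g where "g q = (if q = r then c else 0) + (if q \<in> F then f q else 0)" for q
  have "(\<Sum>q\<in>insert r F. g q *\<^sub>R \<rho> q)
      = (\<Sum>q\<in>insert r F. (if q = r then c *\<^sub>R \<rho> q else 0)) + (\<Sum>q\<in>insert r F. (if q \<in> F then f q *\<^sub>R \<rho> q else 0))"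
    unfolding g_def by (simp add: scaleR_add_left sum.distrib if_distrib[of "\<lambda>a. a *\<^sub>R _"] cong: if_cong)
  also have "\<dots> = c *\<^sub>R \<rho> r + z"
    using F by (simp add: sum.inter_restrict[symmetric] Int_absorb1 subset_insertI)
  finally show ?case using F r by (intro exI[of _ "insert r F"] exI[of _ g]) auto
qed

lemma ext_sum:
  fixes \<tau> :: "'r \<Rightarrow> 'z::real_vector"
  assumes "finite H" "F \<subseteq> H"
  shows "(\<Sum>r\<in>H. (if r \<in> F then f r else 0) *\<^sub>R \<tau> r) = (\<Sum>r\<in>F. f r *\<^sub>R \<tau> r)"
proof -
  have "(\<Sum>r\<in>H. (if r \<in> F then f r else 0) *\<^sub>R \<tau> r) = (\<Sum>r\<in>H. (if r \<in> F then f r *\<^sub>R \<tau> r else 0))"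
    by (rule sum.cong) auto
  also have "\<dots> = (\<Sum>r\<in>H \<inter> F. f r *\<^sub>R \<tau> r)" using assms by (simp add: sum.inter_restrict)
  also have "H \<inter> F = F" using assms by auto
  finally show ?thesis .
qed

lemma gu_exists:
  fixes \<rho> :: "'r \<Rightarrow> 'v::riesz_space" and \<sigma> :: "'r \<Rightarrow> 'w::real_vector"
  assumes span: "span (range \<rho>) = UNIV"
    and REF: "\<And>F. finite F \<Longrightarrow> \<exists>(C::'k set) M u v. finite C \<and> disj_fam C u \<and> (\<forall>k\<in>C. u k = 0 \<longrightarrow> v k = 0)
        \<and> (\<forall>r\<in>F. \<rho> r = (\<Sum>k\<in>C. M r k *\<^sub>R u k) \<and> \<sigma> r = (\<Sum>k\<in>C. M r k *\<^sub>R v k))"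
  shows "\<exists>S. linear S \<and> (\<forall>r. S (\<rho> r) = \<sigma> r)"
proof -
  have wd0: "(\<Sum>r\<in>F. f r *\<^sub>R \<sigma> r) = 0" if F0: "finite F" and z0: "(\<Sum>r\<in>F. f r *\<^sub>R \<rho> r) = 0" for F f
  proof -
    obtain C M u v where *: "finite (C::'k set)" "disj_fam C u" "\<forall>k\<in>C. u k = 0 \<longrightarrow> v k = 0"
      "\<forall>r\<in>F. \<rho> r = (\<Sum>k\<in>C. M r k *\<^sub>R u k) \<and> \<sigma> r = (\<Sum>k\<in>C. M r k *\<^sub>R v k)"
      using REF[OF F0] by blast
    show ?thesis by (rule gu_zero[OF F0 *(1,2), where v=v and M=M and \<rho>=\<rho> and \<sigma>=\<sigma> and f=f]) (use * z0 in auto)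
  qed
  have wd: "(\<Sum>r\<in>F. f r *\<^sub>R \<sigma> r) = (\<Sum>r\<in>G. g r *\<^sub>R \<sigma> r)"
    if "finite F" "finite G" "(\<Sum>r\<in>F. f r *\<^sub>R \<rho> r) = (\<Sum>r\<in>G. g r *\<^sub>R \<rho> r)" for F G f g
  proof -
    define h where "h r = (if r \<in> F then f r else 0) - (if r \<in> G then g r else 0)" for r
    have fin: "finite (F \<union> G)" using that by auto
    have eq: "(\<Sum>r\<in>F \<union> G. h r *\<^sub>R \<tau> r) = (\<Sum>r\<in>F. f r *\<^sub>R \<tau> r) - (\<Sum>r\<in>G. g r *\<^sub>R \<tau> r)"
      for \<tau> :: "'r \<Rightarrow> 'z::real_vector"
      unfolding h_def scaleR_diff_left sum_subtractf
      using ext_sum[OF fin, of F f \<tau>] ext_sum[OF fin, of G g \<tau>] by auto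
    have "(\<Sum>r\<in>F \<union> G. h r *\<^sub>R \<rho> r) = 0" using eq[of \<rho>] that by simp
    hence "(\<Sum>r\<in>F \<union> G. h r *\<^sub>R \<sigma> r) = 0" by (rule wd0[OF fin])
    thus ?thesis using eq[of \<sigma>] by simp
  qed
  define rep where "rep x = (SOME p. finite (fst p) \<and> x = (\<Sum>r\<in>fst p. snd p r *\<^sub>R \<rho> r))" for x
  have rep: "finite (fst (rep x)) \<and> x = (\<Sum>r\<in>fst (rep x). snd (rep x) r *\<^sub>R \<rho> r)" for x
  proof -
    obtain F f where "finite F" "x = (\<Sum>r\<in>F. f r *\<^sub>R \<rho> r)" using span_range_rep[of x \<rho>] span by auto
    hence "\<exists>p. finite (fst p) \<and> x = (\<Sum>r\<in>fst p. snd p r *\<^sub>R \<rho> r)" by (intro exI[of _ "(F, f)"]) auto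
    thus ?thesis unfolding rep_def by (rule someI_ex)
  qed
  define S where "S x = (\<Sum>r\<in>fst (rep x). snd (rep x) r *\<^sub>R \<sigma> r)" for x
  have key: "S x = (\<Sum>r\<in>F. f r *\<^sub>R \<sigma> r)" if "finite F" "x = (\<Sum>r\<in>F. f r *\<^sub>R \<rho> r)" for x F f
    unfolding S_def by (rule wd) (use rep[of x] that in auto)
  have lin: "linear S"
  proof (rule linearI)
    fix x y
    define F f G g where "F = fst (rep x)" and "f = snd (rep x)" and "G = fst (rep y)" and "g = snd (rep y)"
    have Fx: "finite F" "x = (\<Sum>r\<in>F. f r *\<^sub>R \<rho> r)" using rep[of x] by (auto simp: F_def f_def)
    have Gy: "finite G" "y = (\<Sum>r\<in>G. g r *\<^sub>R \<rho> r)" using rep[of y] by (auto simp: G_def g_def)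
    define h where "h r = (if r \<in> F then f r else 0) + (if r \<in> G then g r else 0)" for r
    have fin: "finite (F \<union> G)" using Fx Gy by auto
    have eq: "(\<Sum>r\<in>F \<union> G. h r *\<^sub>R \<tau> r) = (\<Sum>r\<in>F. f r *\<^sub>R \<tau> r) + (\<Sum>r\<in>G. g r *\<^sub>R \<tau> r)"
      for \<tau> :: "'r \<Rightarrow> 'z::real_vector"
      unfolding h_def scaleR_add_left sum.distrib
      using ext_sum[OF fin, of F f \<tau>] ext_sum[OF fin, of G g \<tau>] by auto
    have "x + y = (\<Sum>r\<in>F \<union> G. h r *\<^sub>R \<rho> r)" using eq[of \<rho>] Fx Gy by simp
    hence "S (x + y) = (\<Sum>r\<in>F \<union> G. h r *\<^sub>R \<sigma> r)" by (rule key[OF fin])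
    also have "\<dots> = S x + S y" using eq[of \<sigma>] key[OF Fx] key[OF Gy] by simp
    finally show "S (x + y) = S x + S y" .
  next
    fix c x
    define F f where "F = fst (rep x)" and "f = snd (rep x)"
    have Fx: "finite F" "x = (\<Sum>r\<in>F. f r *\<^sub>R \<rho> r)" using rep[of x] by (auto simp: F_def f_def)
    have "c *\<^sub>R x = (\<Sum>r\<in>F. (c * f r) *\<^sub>R \<rho> r)" using Fx(2) by (simp add: scaleR_sum_right)
    hence "S (c *\<^sub>R x) = (\<Sum>r\<in>F. (c * f r) *\<^sub>R \<sigma> r)" by (rule key[OF Fx(1)])
    thus "S (c *\<^sub>R x) = c *\<^sub>R S x" using key[OF Fx] by (simp add: scaleR_sum_right)
  qed
  have "S (\<rho> r) = \<sigma> r" for r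
    using key[of "{r}" "\<rho> r" "\<lambda>_. 1"] by simp
  thus ?thesis using lin by blast
qed

lemma rep_from_refine:
  fixes \<rho> :: "'r \<Rightarrow> 'v::real_vector"
  assumes span: "span (range \<rho>) = UNIV"
    and REF: "\<And>F. finite F \<Longrightarrow> \<exists>(C::'k set) M u. finite C \<and> P C u \<and> (\<forall>r\<in>F. \<rho> r = (\<Sum>k\<in>C. M r k *\<^sub>R u k))"
  shows "\<exists>(C::'k set) u c. finite C \<and> P C u \<and> x = (\<Sum>k\<in>C. c k *\<^sub>R u k)"
proof -
  obtain F f where F: "finite F" "x = (\<Sum>r\<in>F. f r *\<^sub>R \<rho> r)" using span_range_rep[of x \<rho>] span by auto
  obtain C M u where C: "finite (C::'k set)" "P C u" "\<forall>r\<in>F. \<rho> r = (\<Sum>k\<in>C. M r k *\<^sub>R u k)"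
    using REF[OF F(1)] by blast
  have "(\<Sum>r\<in>F. f r *\<^sub>R \<rho> r) = (\<Sum>k\<in>C. (\<Sum>r\<in>F. f r * M r k) *\<^sub>R u k)"
    by (rule sum_refine[OF F(1) C(1)]) (use C(3) in blast)
  hence "x = (\<Sum>k\<in>C. (\<Sum>r\<in>F. f r * M r k) *\<^sub>R u k)" using F(2) by simp
  thus ?thesis using C(1,2) by (intro exI[of _ C] exI[of _ u] exI[of _ "\<lambda>k. \<Sum>r\<in>F. f r * M r k"]) simp
qed

lemma riesz_hom_by_rep:
  fixes S :: "'v::riesz_space \<Rightarrow> 'w::riesz_space"
  assumes lin: "linear S"
    and rep: "\<And>x. \<exists>(C::'k set) u c. finite C \<and> (disj_fam C u \<and> disj_fam C (\<lambda>k. S (u k))) \<and> x = (\<Sum>k\<in>C. c k *\<^sub>R u k)"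
  shows "riesz_hom S"
proof (rule riesz_homI[OF lin])
  fix x
  obtain C u c where C: "finite (C::'k set)" "disj_fam C u" "disj_fam C (\<lambda>k. S (u k))" "x = (\<Sum>k\<in>C. c k *\<^sub>R u k)"
    using rep[of x] by blast
  have "rabs x = (\<Sum>k\<in>C. \<bar>c k\<bar> *\<^sub>R u k)"
    using C rabs_sum_disj[OF C(1), of u c] unfolding disj_fam_def by auto
  hence "S (rabs x) = (\<Sum>k\<in>C. \<bar>c k\<bar> *\<^sub>R S (u k))" by (simp add: linear_sum[OF lin] linear_scale[OF lin])
  also have "\<dots> = rabs (\<Sum>k\<in>C. c k *\<^sub>R S (u k))"
    using C rabs_sum_disj[OF C(1), of "\<lambda>k. S (u k)" c] unfolding disj_fam_def by auto
  also have "(\<Sum>k\<in>C. c k *\<^sub>R S (u k)) = S x" using C(4) by (simp add: linear_sum[OF lin] linear_scale[OF lin])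
  finally show "S (rabs x) = rabs (S x)" .
qed


section \<open>Stone space\<close>

lemma stone_inf: "z \<in> stone_space \<Longrightarrow> z (inf a b) = (z a \<and> z b)"
  by (simp add: stone_space_def)

lemma stone_xor: "z \<in> stone_space \<Longrightarrow> z (sup (inf a (- b)) (inf (- a) b)) = (z a \<noteq> z b)"
  by (simp add: stone_space_def)

lemma stone_top: "z \<in> stone_space \<Longrightarrow> z top"
proof -
  assume z: "z \<in> stone_space"
  then obtain a where "z a" by (auto simp: stone_space_def)
  moreover have "z (inf a top) = (z a \<and> z top)" by (rule stone_inf[OF z])
  ultimately show ?thesis by simp
qed

lemma stone_compl: "z \<in> stone_space \<Longrightarrow> z (- a) = (\<not> z a)"
proof -
  assume z: "z \<in> stone_space"
  have "z (sup (inf top (- a)) (inf (- top) a)) = (z top \<noteq> z a)" by (rule stone_xor[OF z])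
  thus ?thesis using stone_top[OF z] by simp
qed

lemma stone_sup: "z \<in> stone_space \<Longrightarrow> z (sup a b) = (z a \<or> z b)"
proof -
  assume z: "z \<in> stone_space"
  have "sup a b = - inf (- a) (- b)" by simp
  thus ?thesis using stone_compl[OF z] stone_inf[OF z] by metis
qed

lemma stone_bot: "z \<in> stone_space \<Longrightarrow> \<not> z bot"
  using stone_compl[of z top] stone_top[of z] by simp

lemma hat_inf: "stone_hat (inf a b) = stone_hat a \<inter> stone_hat b"
  by (auto simp: stone_hat_def stone_inf)

lemma hat_sup: "stone_hat (sup a b) = stone_hat a \<union> stone_hat b"
  by (auto simp: stone_hat_def stone_sup)

lemma hat_compl: "stone_hat (- a) = stone_space - stone_hat a"
  by (auto simp: stone_hat_def stone_compl)

lemma hat_bot [simp]: "stone_hat bot = {}"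
  by (auto simp: stone_hat_def stone_bot)

lemma hat_top [simp]: "stone_hat top = stone_space"
  by (auto simp: stone_hat_def stone_top)

lemma hat_sub: "stone_hat a \<subseteq> stone_space"
  by (auto simp: stone_hat_def)

definition fjoin :: "'a::boolean_algebra list \<Rightarrow> 'a" where "fjoin xs = foldr sup xs bot"

lemma fjoin_simps [simp]: "fjoin [] = bot" "fjoin (x # xs) = sup x (fjoin xs)"
  by (simp_all add: fjoin_def)

lemma fjoin_append: "fjoin (xs @ ys) = sup (fjoin xs) (fjoin ys)"
  by (induction xs) (auto simp: sup_aci)

lemma fjoin_filter: "fjoin ys \<le> sup x (fjoin (filter (\<lambda>y. y \<noteq> x) ys))"
  by (induction ys) (auto intro: le_supI2 sup.coboundedI1 sup.coboundedI2 le_supI1 simp: sup.absorb_iff2 sup_aci)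

lemma hat_fjoin: "stone_hat (fjoin xs) = (\<Union>x\<in>set xs. stone_hat x)"
  by (induction xs) (auto simp: hat_sup)

lemma bool_aux: "inf (sup x j1) (sup (- x) j2) \<le> sup j1 (j2::'a::boolean_algebra)"
proof -
  have "inf (sup x j1) (sup (- x) j2) = sup (inf x j2) (sup (inf j1 (- x)) (inf j1 j2))"
    by (simp add: inf_sup_distrib1 inf_sup_distrib2 inf_aci sup_aci)
  also have "\<dots> \<le> sup j1 j2" by (intro sup_least) (auto intro: le_supI1 le_supI2)
  finally show ?thesis .
qed

lemma pit:
  fixes a :: "'a::boolean_algebra"
  assumes good0: "\<And>xs. set xs \<subseteq> J \<Longrightarrow> \<not> a \<le> fjoin xs"
  shows "\<exists>z\<in>stone_space. z a \<and> (\<forall>j\<in>J. \<not> z j)"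
proof -
  define A where "A = {I. J \<subseteq> I \<and> (\<forall>xs. set xs \<subseteq> I \<longrightarrow> \<not> a \<le> fjoin xs)}"
  have "\<exists>M\<in>A. \<forall>X\<in>A. M \<subseteq> X \<longrightarrow> X = M"
  proof (rule Zorn_Lemma2, intro ballI)
    fix C assume C: "C \<in> chains A"
    show "\<exists>U\<in>A. \<forall>X\<in>C. X \<subseteq> U"
    proof (cases "C = {}")
      case True thus ?thesis using good0 by (intro bexI[of _ J]) (auto simp: A_def)
    next
      case False
      have "\<Union>C \<in> A" unfolding A_def
      proof (safe)
        fix x assume "x \<in> J" thus "x \<in> \<Union>C" using False C by (auto simp: chains_def A_def)
      next
        fix xs assume xs: "set xs \<subseteq> \<Union>C" "a \<le> fjoin xs"
        obtain B where "B \<in> C" "set xs \<subseteq> B"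
        proof (rule finite_subset_Union_chain[of "set xs" C A])
          show "subset.chain A C" using C by (simp add: chains_alt_def)
        qed (use xs False in auto)
        thus False using xs C by (auto simp: chains_def A_def)
      qed
      thus ?thesis by blast
    qed
  qed
  then obtain M where M: "M \<in> A" and max: "\<And>X. X \<in> A \<Longrightarrow> M \<subseteq> X \<Longrightarrow> X = M" by blast
  have JM: "J \<subseteq> M" and good: "\<And>xs. set xs \<subseteq> M \<Longrightarrow> \<not> a \<le> fjoin xs" using M by (auto simp: A_def)
  have m1: "\<exists>xs. set xs \<subseteq> M \<and> a \<le> sup x (fjoin xs)" if "x \<notin> M" for x
  proof -
    have "insert x M \<notin> A" using max[of "insert x M"] that by auto
    then obtain ys where ys: "set ys \<subseteq> insert x M" "a \<le> fjoin ys" using JM by (auto simp: A_def)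
    have "set (filter (\<lambda>y. y \<noteq> x) ys) \<subseteq> M" using ys by auto
    moreover have "a \<le> sup x (fjoin (filter (\<lambda>y. y \<noteq> x) ys))" by (rule order_trans[OF ys(2) fjoin_filter])
    ultimately show ?thesis by blast
  qed
  have m2: "x \<in> M \<or> - x \<in> M" for x
  proof (rule ccontr)
    assume "\<not> (x \<in> M \<or> - x \<in> M)"
    then obtain xs ys where "set xs \<subseteq> M" "a \<le> sup x (fjoin xs)" "set ys \<subseteq> M" "a \<le> sup (- x) (fjoin ys)"
      using m1 by blast
    note h = this
    have "a \<le> inf (sup x (fjoin xs)) (sup (- x) (fjoin ys))" using h(2,4) by (rule le_infI)
    moreover have "inf (sup x (fjoin xs)) (sup (- x) (fjoin ys)) \<le> fjoin (xs @ ys)"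
      unfolding fjoin_append by (rule bool_aux)
    ultimately have "a \<le> fjoin (xs @ ys)" by (rule order_trans)
    moreover have "set (xs @ ys) \<subseteq> M" using h(1,3) by simp
    ultimately show False using good by blast
  qed
  have m3: "\<not> (x \<in> M \<and> - x \<in> M)" for x
    using good[of "[x, - x]"] by auto
  have m4: "y \<in> M" if "x \<in> M" "y \<le> x" for x y
  proof (rule ccontr)
    assume "y \<notin> M"
    hence "- y \<in> M" using m2 by blast
    moreover have "top \<le> sup x (- y)"
    proof -
      have "top = sup y (- y)" by simp
      also have "\<dots> \<le> sup x (- y)" using that(2) by (rule sup_mono) simp
      finally show ?thesis .
    qed
    hence "a \<le> fjoin [x, - y]" by (simp add: top_unique)
    ultimately show False using good[of "[x, - y]"] that by auto
  qed
  have m5: "sup x y \<in> M" if "x \<in> M" "y \<in> M" for x y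
  proof (rule ccontr)
    assume "sup x y \<notin> M"
    hence "- sup x y \<in> M" using m2 by blast
    moreover have "fjoin [x, y, - sup x y] = top"
    proof -
      have "fjoin [x, y, - sup x y] = sup x (sup y (- sup x y))" by (simp only: fjoin_simps sup_bot_right)
      also have "\<dots> = sup (sup x y) (- sup x y)" by (simp only: sup_assoc)
      also have "\<dots> = top" by (rule sup_compl_top)
      finally show ?thesis .
    qed
    ultimately show False using good[of "[x, y, - sup x y]"] that by auto
  qed
  define z where "z x = (x \<notin> M)" for x
  have zc: "z (- x) = (\<not> z x)" for x unfolding z_def using m2 m3 by blast
  have zi: "z (inf x y) = (z x \<and> z y)" for x y
  proof -
    have "z (inf x y) = (- inf x y \<in> M)" using m2[of "inf x y"] m3[of "inf x y"] unfolding z_def by blast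
    also have "\<dots> = (- x \<in> M \<and> - y \<in> M)"
    proof
      assume h: "- inf x y \<in> M"
      show "- x \<in> M \<and> - y \<in> M"
        using m4[OF h, of "- x"] m4[OF h, of "- y"] by simp
    next
      assume "- x \<in> M \<and> - y \<in> M"
      thus "- inf x y \<in> M" using m5[of "- x" "- y"] by simp
    qed
    also have "\<dots> = (z x \<and> z y)" using m2 m3 unfolding z_def by blast
    finally show ?thesis .
  qed
  have zs: "z (sup x y) = (z x \<or> z y)" for x y
  proof -
    have "z (sup x y) = z (- inf (- x) (- y))" by simp
    also have "\<dots> = (z x \<or> z y)" by (simp only: zc zi de_Morgan_conj not_not)
    finally show ?thesis .
  qed
  have "z \<in> stone_space"
  proof -
    have "z top" using good[of "[top]"] unfolding z_def by auto
    thus ?thesis unfolding stone_space_def using zi zs zc by auto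
  qed
  moreover have "z a" using good[of "[a]"] unfolding z_def by auto
  moreover have "\<forall>j\<in>J. \<not> z j" using JM unfolding z_def by auto
  ultimately show ?thesis by blast
qed

lemma hat_nonempty: "a \<noteq> bot \<Longrightarrow> stone_hat a \<noteq> {}"
proof -
  assume a: "a \<noteq> bot"
  have "\<exists>z\<in>stone_space. z a \<and> (\<forall>j\<in>{}. \<not> z j)"
    by (rule pit) (use a in \<open>auto simp: bot_unique\<close>)
  thus ?thesis by (auto simp: stone_hat_def)
qed

lemma hat_eq_empty: "stone_hat a = {} \<longleftrightarrow> a = bot"
  using hat_nonempty by auto

lemma hat_cover_finite:
  assumes "stone_space \<subseteq> (\<Union>j\<in>J. stone_hat j)"
  shows "\<exists>xs. set xs \<subseteq> J \<and> stone_space \<subseteq> (\<Union>j\<in>set xs. stone_hat j)"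
proof (rule ccontr)
  assume n: "\<not> ?thesis"
  have "\<exists>z\<in>stone_space. z top \<and> (\<forall>j\<in>J. \<not> z j)"
  proof (rule pit)
    fix xs assume xs: "set xs \<subseteq> J"
    show "\<not> top \<le> fjoin xs"
    proof
      assume "top \<le> fjoin xs"
      hence "fjoin xs = top" by (simp add: top_unique)
      hence "stone_space \<subseteq> (\<Union>j\<in>set xs. stone_hat j)" using hat_fjoin[of xs] by simp
      thus False using n xs by blast
    qed
  qed
  thus False using assms by (auto simp: stone_hat_def)
qed


lemma Union_range_hat: "\<Union> (range stone_hat) = (stone_space :: ('a::boolean_algebra \<Rightarrow> bool) set)"
  using hat_sub hat_top by blast

lemma topspace_stone [simp]: "topspace (stone_topology :: ('a::boolean_algebra \<Rightarrow> bool) topology) = stone_space"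
  unfolding stone_topology_def using Union_range_hat[where 'a='a] by simp

lemma openin_hat: "openin stone_topology (stone_hat a)"
  unfolding stone_topology_def openin_subtopology
  by (intro exI[of _ "stone_hat a"]) (auto intro: topology_generated_by_Basis simp: stone_hat_def)

lemma closedin_hat: "closedin stone_topology (stone_hat a)"
proof -
  have "topspace stone_topology - stone_hat a = stone_hat (- a)" by (simp add: hat_compl hat_sub Diff_Diff_Int Int_absorb1)
  thus ?thesis unfolding closedin_def using openin_hat[of "- a"] hat_sub[of a] by simp
qed

lemma gen_basis:
  assumes "generate_topology_on (range stone_hat) T"
  shows "\<forall>z\<in>T \<inter> stone_space. \<exists>a. z \<in> stone_hat a \<and> stone_hat a \<subseteq> T"
  using assms
proof (induction rule: generate_topology_on.induct)
  case Empty thus ?case by simp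
next
  case (Int a b)
  show ?case
  proof
    fix z assume z: "z \<in> a \<inter> b \<inter> stone_space"
    then obtain x y where "z \<in> stone_hat x" "stone_hat x \<subseteq> a" "z \<in> stone_hat y" "stone_hat y \<subseteq> b"
      using Int.IH by blast
    thus "\<exists>c. z \<in> stone_hat c \<and> stone_hat c \<subseteq> a \<inter> b" by (intro exI[of _ "inf x y"]) (auto simp: hat_inf)
  qed
next
  case (UN K)
  show ?case
  proof
    fix z assume "z \<in> \<Union>K \<inter> stone_space"
    then obtain k where "k \<in> K" "z \<in> k \<inter> stone_space" by blast
    with UN.IH obtain a where "z \<in> stone_hat a" "stone_hat a \<subseteq> k" by blast
    thus "\<exists>a. z \<in> stone_hat a \<and> stone_hat a \<subseteq> \<Union>K" using \<open>k \<in> K\<close> by blast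
  qed
next
  case (Basis s) thus ?case by blast
qed

lemma open_basis:
  assumes "openin stone_topology U" "z \<in> U"
  shows "\<exists>a. z \<in> stone_hat a \<and> stone_hat a \<subseteq> U"
proof -
  obtain T where T: "generate_topology_on (range stone_hat) T" "U = T \<inter> stone_space"
    using assms(1) unfolding stone_topology_def openin_subtopology openin_topology_generated_by_iff by blast
  then obtain a where "z \<in> stone_hat a" "stone_hat a \<subseteq> T" using gen_basis[OF T(1)] assms(2) by blast
  thus ?thesis using T(2) hat_sub[of a] by blast
qed

lemma compact_stone: "compact_space (stone_topology :: ('a::boolean_algebra \<Rightarrow> bool) topology)"
  unfolding compact_space_alt
proof (intro allI impI)
  fix \<U> :: "('a \<Rightarrow> bool) set set"
  assume U: "(\<forall>U\<in>\<U>. openin stone_topology U) \<and> topspace stone_topology \<subseteq> \<Union>\<U>"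
  define J where "J = {a. \<exists>u\<in>\<U>. stone_hat a \<subseteq> u}"
  have "stone_space \<subseteq> (\<Union>j\<in>J. stone_hat j)"
  proof
    fix z :: "'a \<Rightarrow> bool" assume z: "z \<in> stone_space"
    then obtain u where u: "u \<in> \<U>" "z \<in> u" using U by auto
    then obtain a where "z \<in> stone_hat a" "stone_hat a \<subseteq> u" using open_basis U by blast
    thus "z \<in> (\<Union>j\<in>J. stone_hat j)" using u by (auto simp: J_def)
  qed
  then obtain xs where xs: "set xs \<subseteq> J" "stone_space \<subseteq> (\<Union>j\<in>set xs. stone_hat j)"
    using hat_cover_finite by blast
  define ch where "ch j = (SOME u. u \<in> \<U> \<and> stone_hat j \<subseteq> u)" for j
  have ch: "ch j \<in> \<U> \<and> stone_hat j \<subseteq> ch j" if "j \<in> J" for j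
    unfolding ch_def by (rule someI_ex) (use that in \<open>auto simp: J_def\<close>)
  show "\<exists>\<F>. finite \<F> \<and> \<F> \<subseteq> \<U> \<and> topspace stone_topology \<subseteq> \<Union>\<F>"
  proof (intro exI[of _ "ch ` set xs"] conjI)
    show "finite (ch ` set xs)" by simp
    show "ch ` set xs \<subseteq> \<U>" using ch xs(1) by auto
    show "topspace stone_topology \<subseteq> \<Union> (ch ` set xs)" using ch xs by fastforce
  qed
qed

lemma topspace_fp [simp]: "topspace (free_prod_topology TYPE('a::boolean_algebra) TYPE('b::boolean_algebra))
   = (stone_space :: ('a \<Rightarrow> bool) set) \<times> (stone_space :: ('b \<Rightarrow> bool) set)"
  by (simp add: free_prod_topology_def)

lemma rect_in_fp: "stone_hat (a::'a::boolean_algebra) \<times> stone_hat (b::'b::boolean_algebra) \<in> free_product TYPE('a) TYPE('b)"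
  unfolding free_product_def free_prod_topology_def
  by (simp add: openin_prod_Times_iff closedin_prod_Times_iff openin_hat closedin_hat)

lemma compact_fp: "compact_space (free_prod_topology TYPE('a::boolean_algebra) TYPE('b::boolean_algebra))"
  unfolding free_prod_topology_def compact_space_prod_topology using compact_stone[where 'a='a] compact_stone[where 'a='b] by blast

lemma fp_decomp:
  assumes "W \<in> free_product TYPE('a::boolean_algebra) TYPE('b::boolean_algebra)"
  shows "\<exists>rs :: ('a \<times> 'b) list. W = (\<Union>(a, b)\<in>set rs. stone_hat a \<times> stone_hat b)"
proof -
  let ?X = "free_prod_topology TYPE('a) TYPE('b)"
  have cW: "compactin ?X W" using assms compact_fp unfolding free_product_def
    by (auto intro: closedin_compact_space)
  have oW: "openin (prod_topology stone_topology stone_topology) W"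
    using assms unfolding free_product_def free_prod_topology_def by auto
  define \<U> where "\<U> = {R. \<exists>a b. R = stone_hat (a::'a) \<times> stone_hat (b::'b) \<and> R \<subseteq> W}"
  have h1: "\<forall>U\<in>\<U>. openin ?X U"
    unfolding \<U>_def free_prod_topology_def by (auto simp: openin_prod_Times_iff openin_hat)
  have h2: "W \<subseteq> \<Union>\<U>"
  proof
    fix p assume p: "p \<in> W"
    obtain x y where xy: "p = (x, y)" by (cases p)
    have "\<exists>U V. openin stone_topology U \<and> openin stone_topology V \<and> x \<in> U \<and> y \<in> V \<and> U \<times> V \<subseteq> W"
      using oW p xy unfolding openin_prod_topology_alt by simp
    then obtain U V where UV: "openin stone_topology U" "openin stone_topology V" "x \<in> U" "y \<in> V" "U \<times> V \<subseteq> W"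
      by blast
    obtain a where a: "x \<in> stone_hat a" "stone_hat a \<subseteq> U" using open_basis[OF UV(1,3)] by blast
    obtain b where b: "y \<in> stone_hat b" "stone_hat b \<subseteq> V" using open_basis[OF UV(2,4)] by blast
    have "stone_hat a \<times> stone_hat b \<subseteq> U \<times> V" using a(2) b(2) by (rule Sigma_mono)
    hence "stone_hat a \<times> stone_hat b \<subseteq> W" using UV(5) by (rule order_trans)
    hence "stone_hat a \<times> stone_hat b \<in> \<U>" unfolding \<U>_def by blast
    thus "p \<in> \<Union>\<U>" using xy a b by blast
  qed
  have h3: "\<forall>\<V>. (\<forall>U\<in>\<V>. openin ?X U) \<and> W \<subseteq> \<Union>\<V> \<longrightarrow> (\<exists>\<F>. finite \<F> \<and> \<F> \<subseteq> \<V> \<and> W \<subseteq> \<Union>\<F>)"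
    using cW unfolding compactin_def by (rule conjunct2)
  have "\<exists>\<F>. finite \<F> \<and> \<F> \<subseteq> \<U> \<and> W \<subseteq> \<Union>\<F>"
    using h3 h1 h2 by blast
  then obtain \<F> where F: "finite \<F>" "\<F> \<subseteq> \<U>" "W \<subseteq> \<Union>\<F>"
    by blast
  define ch where "ch R = (SOME ab. R = stone_hat (fst ab) \<times> stone_hat (snd ab))" for R :: "(('a \<Rightarrow> bool) \<times> ('b \<Rightarrow> bool)) set"
  have ch: "R = stone_hat (fst (ch R)) \<times> stone_hat (snd (ch R))" if "R \<in> \<U>" for R
    unfolding ch_def by (rule someI_ex) (use that in \<open>auto simp: \<U>_def\<close>)
  obtain fs where fs: "set fs = \<F>" using finite_list[OF F(1)] by blast
  define rs where "rs = map ch fs"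
  have "(\<Union>(a, b)\<in>set rs. stone_hat a \<times> stone_hat b) = \<Union>\<F>"
  proof -
    have "(\<Union>(a, b)\<in>set rs. stone_hat a \<times> stone_hat b) = (\<Union>R\<in>\<F>. stone_hat (fst (ch R)) \<times> stone_hat (snd (ch R)))"
      unfolding rs_def fs[symmetric] set_map by (simp add: case_prod_beta)
    also have "\<dots> = (\<Union>R\<in>\<F>. R)" using ch F(2) by (intro SUP_cong refl) (auto simp del: mem_Sigma_iff)
    also have "\<dots> = \<Union>\<F>" by simp
    finally show ?thesis .
  qed
  moreover have "\<Union>\<F> \<subseteq> W" using F(2) by (auto simp: \<U>_def)
  ultimately show ?thesis using F(3) by (intro exI[of _ rs]) auto
qed


definition cara :: "'e::riesz_space \<Rightarrow> ('c::boolean_algebra \<Rightarrow> 'e) \<Rightarrow> bool" where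
  "cara e cf \<longleftrightarrow> strong_unit e \<and> bool_iso UNIV sup inf uminus bot top (components e) sup inf (\<lambda>x. e - x) 0 e cf
     \<and> span (components e) = UNIV"

lemma lin_eq:
  fixes f g :: "'v::real_vector \<Rightarrow> 'w::real_vector"
  assumes "linear f" "linear g" "span B = UNIV" "\<And>b. b \<in> B \<Longrightarrow> f b = g b"
  shows "f = g"
proof
  fix x
  have "x \<in> span B" using assms(3) by simp
  thus "f x = g x"
  proof (induction rule: span_induct_alt)
    case base thus ?case using linear_0[OF assms(1)] linear_0[OF assms(2)] by simp
  next
    case (step c x y)
    thus ?case using assms by (simp add: linear_add linear_scale)
  qed
qed

context
  fixes e :: "'e::riesz_space" and cf :: "'c::boolean_algebra \<Rightarrow> 'e"
  assumes ca: "cara e cf"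
begin

lemma cara_bij: "bij_betw cf UNIV (components e)"
  using ca by (simp add: cara_def bool_iso_def)

lemma cara_inf: "cf (inf a b) = inf (cf a) (cf b)"
  using ca by (simp add: cara_def bool_iso_def)

lemma cara_sup: "cf (sup a b) = sup (cf a) (cf b)"
  using ca by (simp add: cara_def bool_iso_def)

lemma cara_bot: "cf bot = 0"
  using ca by (simp add: cara_def bool_iso_def)

lemma cara_top: "cf top = e"
  using ca by (simp add: cara_def bool_iso_def)

lemma cara_range: "range cf = components e"
  using cara_bij by (simp add: bij_betw_def)

lemma cara_comp: "cf a \<in> components e"
  using cara_range by blast

lemma cara_pos: "0 \<le> cf a"
  using cara_comp[of a] by (simp add: components_def)

lemma cara_le: "cf a \<le> e"
proof -
  have "inf (cf a) (e - cf a) = 0" using cara_comp[of a] by (simp add: components_def)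
  hence "0 \<le> e - cf a" by (metis inf_le2)
  thus ?thesis by simp
qed

lemma cara_e_pos: "0 \<le> e"
  using cara_pos[of top] cara_top by simp

lemma cara_inj: "cf a = cf b \<Longrightarrow> a = b"
  using cara_bij by (auto simp: bij_betw_def inj_on_def)

lemma cara_zero: "cf a = 0 \<longleftrightarrow> a = bot"
  using cara_inj[of a bot] cara_bot by auto

lemma cara_span: "span (range cf) = UNIV"
  using ca cara_range by (simp add: cara_def)

lemma cara_badd: "badd cf"
  unfolding badd_def
proof (intro allI impI)
  fix x y :: 'c assume "inf x y = bot"
  hence "inf (cf x) (cf y) = 0" using cara_inf cara_bot by metis
  thus "cf (sup x y) = cf x + cf y" using add_eq_inf_sup[of "cf x" "cf y"] cara_sup by simp
qed

lemma cara_bound: "\<exists>c\<ge>0. x \<le> c *\<^sub>R e"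
proof -
  obtain c where c: "sup x (- x) \<le> c *\<^sub>R e" using ca by (auto simp: cara_def strong_unit_def)
  have "x \<le> c *\<^sub>R e" using c by (meson order_trans sup_ge1)
  also have "\<dots> \<le> max c 0 *\<^sub>R e" by (rule scaleR_right_mono) (auto simp: cara_e_pos)
  finally show ?thesis by (intro exI[of _ "max c 0"]) auto
qed

lemma cara_ref:
  assumes "finite F"
  obtains ss where "set ss = F"
    "disj_fam (vecs (length ss)) (\<lambda>k. cf (atm ss k))"
proof -
  obtain ss where ss: "set ss = F" using finite_list[OF assms] by blast
  have "disj_fam (vecs (length ss)) (\<lambda>k. cf (atm ss k))"
    unfolding disj_fam_def
  proof (intro conjI ballI impI)
    fix k assume "k \<in> vecs (length ss)" show "0 \<le> cf (atm ss k)" by (rule cara_pos)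
  next
    fix k k' assume "k \<in> vecs (length ss)" "k' \<in> vecs (length ss)" "k \<noteq> k'"
    hence "inf (atm ss k) (atm ss k') = bot" by (intro atm_disj) (auto simp: vecs_def)
    thus "inf (cf (atm ss k)) (cf (atm ss k')) = 0" by (metis cara_inf cara_bot)
  qed
  thus ?thesis using that ss by blast
qed

lemma cara_ext:
  fixes \<mu> :: "'c \<Rightarrow> 'w::real_vector"
  assumes "badd \<mu>"
  shows "\<exists>S. linear S \<and> (\<forall>a. S (cf a) = \<mu> a)"
proof (rule gu_exists[OF cara_span])
  fix F :: "'c set" assume F: "finite F"
  obtain ss where ss: "set ss = F" "disj_fam (vecs (length ss)) (\<lambda>k. cf (atm ss k))"
    by (rule cara_ref[OF F])
  have r1: "cf r = (\<Sum>k\<in>vecs (length ss). coefm ss r k *\<^sub>R cf (atm ss k))" if "r \<in> F" for r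
    using badd_rep[OF cara_badd, of r ss] ss(1) that by simp
  have r2: "\<mu> r = (\<Sum>k\<in>vecs (length ss). coefm ss r k *\<^sub>R \<mu> (atm ss k))" if "r \<in> F" for r
    using badd_rep[OF assms, of r ss] ss(1) that by simp
  show "\<exists>(C::bool list set) M u v. finite C \<and> disj_fam C u \<and> (\<forall>k\<in>C. u k = 0 \<longrightarrow> v k = 0)
        \<and> (\<forall>r\<in>F. cf r = (\<Sum>k\<in>C. M r k *\<^sub>R u k) \<and> \<mu> r = (\<Sum>k\<in>C. M r k *\<^sub>R v k))"
  proof (intro exI conjI ballI)
    show "finite (vecs (length ss))" by simp
    show "disj_fam (vecs (length ss)) (\<lambda>k. cf (atm ss k))" by (rule ss(2))
    fix k assume "k \<in> vecs (length ss)"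
    show "cf (atm ss k) = 0 \<longrightarrow> \<mu> (atm ss k) = 0" using cara_zero badd_bot[OF assms] by auto
  next
    fix r assume "r \<in> F"
    show "cf r = (\<Sum>k\<in>vecs (length ss). coefm ss r k *\<^sub>R cf (atm ss k))" by (rule r1) fact
    show "\<mu> r = (\<Sum>k\<in>vecs (length ss). coefm ss r k *\<^sub>R \<mu> (atm ss k))" by (rule r2) fact
  qed
qed

lemma cara_riesz:
  fixes S :: "'e \<Rightarrow> 'w::riesz_space"
  assumes lin: "linear S" and pos: "\<And>a. 0 \<le> S (cf a)"
    and dis: "\<And>a b. inf a b = bot \<Longrightarrow> inf (S (cf a)) (S (cf b)) = 0"
  shows "riesz_hom S"
proof (rule riesz_hom_by_rep[OF lin])
  fix x
  show "\<exists>(C::bool list set) u c. finite C \<and> (disj_fam C u \<and> disj_fam C (\<lambda>k. S (u k))) \<and> x = (\<Sum>k\<in>C. c k *\<^sub>R u k)"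
  proof (rule rep_from_refine[OF cara_span, where P="\<lambda>C u. disj_fam C u \<and> disj_fam C (\<lambda>k. S (u k))"])
    fix F :: "'c set" assume F: "finite F"
    obtain ss where ss: "set ss = F" "disj_fam (vecs (length ss)) (\<lambda>k. cf (atm ss k))"
      by (rule cara_ref[OF F])
    have r1: "cf r = (\<Sum>k\<in>vecs (length ss). coefm ss r k *\<^sub>R cf (atm ss k))" if "r \<in> F" for r
      using badd_rep[OF cara_badd, of r ss] ss(1) that by simp
    have d2: "disj_fam (vecs (length ss)) (\<lambda>k. S (cf (atm ss k)))"
      unfolding disj_fam_def
    proof (intro conjI ballI impI)
      fix k show "0 \<le> S (cf (atm ss k))" by (rule pos)
    next
      fix k k' assume "k \<in> vecs (length ss)" "k' \<in> vecs (length ss)" "k \<noteq> k'"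
      hence "inf (atm ss k) (atm ss k') = bot" by (intro atm_disj) (auto simp: vecs_def)
      thus "inf (S (cf (atm ss k))) (S (cf (atm ss k'))) = 0" by (rule dis)
    qed
    show "\<exists>(C::bool list set) M u. finite C \<and> (disj_fam C u \<and> disj_fam C (\<lambda>k. S (u k)))
         \<and> (\<forall>r\<in>F. cf r = (\<Sum>k\<in>C. M r k *\<^sub>R u k))"
      using ss(2) d2 r1 by (intro exI[of _ "vecs (length ss)"] exI[of _ "coefm ss"] exI[of _ "\<lambda>k. cf (atm ss k)"]) simp
  qed
qed

lemma cara_lin_eq:
  fixes S T :: "'e \<Rightarrow> 'w::real_vector"
  assumes "linear S" "linear T" "\<And>a. S (cf a) = T (cf a)"
  shows "S = T"
  by (rule lin_eq[OF assms(1,2) cara_span]) (use assms(3) in auto)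

end


lemma badd2_rep:
  fixes \<nu> :: "'a::boolean_algebra \<Rightarrow> 'b::boolean_algebra \<Rightarrow> 'w::real_vector"
  assumes b1: "\<And>b. badd (\<lambda>a. \<nu> a b)" and b2: "\<And>a. badd (\<lambda>b. \<nu> a b)"
    and a: "a \<in> set ss" and b: "b \<in> set ts"
  shows "\<nu> a b = (\<Sum>k\<in>vecs (length ss) \<times> vecs (length ts).
                  (coefm ss a (fst k) * coefm ts b (snd k)) *\<^sub>R \<nu> (atm ss (fst k)) (atm ts (snd k)))"
proof -
  have "\<nu> a b = (\<Sum>k1\<in>vecs (length ss). coefm ss a k1 *\<^sub>R \<nu> (atm ss k1) b)"
    using badd_rep[OF b1[of b] a] by simp
  also have "\<dots> = (\<Sum>k1\<in>vecs (length ss). coefm ss a k1 *\<^sub>R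
                    (\<Sum>k2\<in>vecs (length ts). coefm ts b k2 *\<^sub>R \<nu> (atm ss k1) (atm ts k2)))"
  proof (rule sum.cong[OF refl])
    fix k1 show "coefm ss a k1 *\<^sub>R \<nu> (atm ss k1) b = coefm ss a k1 *\<^sub>R
                    (\<Sum>k2\<in>vecs (length ts). coefm ts b k2 *\<^sub>R \<nu> (atm ss k1) (atm ts k2))"
      using badd_rep[OF b2[of "atm ss k1"] b] by simp
  qed
  also have "\<dots> = (\<Sum>k1\<in>vecs (length ss). \<Sum>k2\<in>vecs (length ts).
                   (coefm ss a k1 * coefm ts b k2) *\<^sub>R \<nu> (atm ss k1) (atm ts k2))"
    by (simp add: scaleR_sum_right)
  also have "\<dots> = (\<Sum>k\<in>vecs (length ss) \<times> vecs (length ts).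
                  (coefm ss a (fst k) * coefm ts b (snd k)) *\<^sub>R \<nu> (atm ss (fst k)) (atm ts (snd k)))"
    by (simp add: sum.cartesian_product case_prod_beta)
  finally show ?thesis .
qed

lemma fp_Un: "W \<in> free_product A B \<Longrightarrow> W' \<in> free_product A B \<Longrightarrow> W \<union> W' \<in> free_product A B"
  unfolding free_product_def by (auto intro: openin_Un closedin_Un)

lemma fp_Int: "W \<in> free_product A B \<Longrightarrow> W' \<in> free_product A B \<Longrightarrow> W \<inter> W' \<in> free_product A B"
  unfolding free_product_def by (auto intro: openin_Int closedin_Int)

lemma rect_Int: "(stone_hat a \<times> stone_hat b) \<inter> (stone_hat a' \<times> stone_hat b') = stone_hat (inf a a') \<times> stone_hat (inf b b')"
  by (auto simp: hat_inf)

context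
  fixes eH :: "'h::riesz_space" and cH :: "(('a::boolean_algebra \<Rightarrow> bool) \<times> ('b::boolean_algebra \<Rightarrow> bool)) set \<Rightarrow> 'h"
  assumes bi: "bool_iso (free_product TYPE('a) TYPE('b)) (\<union>) (\<inter>)
       (\<lambda>S. topspace (free_prod_topology TYPE('a) TYPE('b)) - S) {} (topspace (free_prod_topology TYPE('a) TYPE('b)))
       (components eH) sup inf (\<lambda>x. eH - x) 0 eH cH"
    and spH: "span (components eH) = UNIV"
begin

abbreviation "FP \<equiv> free_product TYPE('a) TYPE('b)"

definition rho :: "'a \<Rightarrow> 'b \<Rightarrow> 'h" where "rho a b = cH (stone_hat a \<times> stone_hat b)"

lemma cH_Un: "W \<in> FP \<Longrightarrow> W' \<in> FP \<Longrightarrow> cH (W \<union> W') = sup (cH W) (cH W')"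
  using bi by (simp add: bool_iso_def)

lemma cH_Int: "W \<in> FP \<Longrightarrow> W' \<in> FP \<Longrightarrow> cH (W \<inter> W') = inf (cH W) (cH W')"
  using bi by (simp add: bool_iso_def)

lemma cH_empty: "cH {} = 0"
  using bi by (simp add: bool_iso_def)

lemma cH_comp: "W \<in> FP \<Longrightarrow> cH W \<in> components eH"
  using bi by (auto simp: bool_iso_def bij_betw_def)

lemma cH_range: "cH ` FP = components eH"
  using bi by (simp add: bool_iso_def bij_betw_def)

lemma cH_inj: "W \<in> FP \<Longrightarrow> W' \<in> FP \<Longrightarrow> cH W = cH W' \<Longrightarrow> W = W'"
  using bi by (auto simp: bool_iso_def bij_betw_def inj_on_def)

lemma empty_fp: "{} \<in> FP"
  using rect_in_fp[of "bot::'a" "bot::'b"] by simp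

lemma cH_add: "W \<in> FP \<Longrightarrow> W' \<in> FP \<Longrightarrow> cH (W \<union> W') + cH (W \<inter> W') = cH W + cH W'"
  using add_eq_inf_sup[of "cH W" "cH W'"] by (simp add: cH_Un cH_Int)

lemma rho_pos: "0 \<le> rho a b"
  using cH_comp[OF rect_in_fp] by (simp add: rho_def components_def)

lemma rho_inf: "inf (rho a b) (rho a' b') = rho (inf a a') (inf b b')"
  unfolding rho_def by (simp add: cH_Int[OF rect_in_fp rect_in_fp, symmetric] rect_Int)

lemma rho_zero: "rho a b = 0 \<Longrightarrow> a = bot \<or> b = bot"
proof -
  assume "rho a b = 0"
  hence "cH (stone_hat a \<times> stone_hat b) = cH {}" by (simp add: rho_def cH_empty)
  hence "stone_hat a \<times> stone_hat b = {}" by (rule cH_inj[OF rect_in_fp empty_fp])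
  thus ?thesis by (auto simp: hat_eq_empty)
qed

lemma rho_bot1 [simp]: "rho bot b = 0"
  by (simp add: rho_def cH_empty)

lemma rho_bot2 [simp]: "rho a bot = 0"
  by (simp add: rho_def cH_empty)

lemma rho_badd1: "badd (\<lambda>a. rho a b)"
  unfolding badd_def
proof (intro allI impI)
  fix x y :: 'a assume xy: "inf x y = bot"
  have "stone_hat (sup x y) \<times> stone_hat b = (stone_hat x \<times> stone_hat b) \<union> (stone_hat y \<times> stone_hat b)"
    by (auto simp: hat_sup)
  moreover have "(stone_hat x \<times> stone_hat b) \<inter> (stone_hat y \<times> stone_hat b) = {}"
    using xy by (simp add: rect_Int)
  ultimately show "rho (sup x y) b = rho x b + rho y b"
    using cH_add[OF rect_in_fp[of x b] rect_in_fp[of y b]] by (simp add: rho_def cH_empty)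
qed

lemma rho_badd2: "badd (\<lambda>b. rho a b)"
  unfolding badd_def
proof (intro allI impI)
  fix x y :: 'b assume xy: "inf x y = bot"
  have "stone_hat a \<times> stone_hat (sup x y) = (stone_hat a \<times> stone_hat x) \<union> (stone_hat a \<times> stone_hat y)"
    by (auto simp: hat_sup)
  moreover have "(stone_hat a \<times> stone_hat x) \<inter> (stone_hat a \<times> stone_hat y) = {}"
    using xy by (simp add: rect_Int)
  ultimately show "rho a (sup x y) = rho a x + rho a y"
    using cH_add[OF rect_in_fp[of a x] rect_in_fp[of a y]] by (simp add: rho_def cH_empty)
qed

lemma rects_fp: "(\<Union>(a, b)\<in>set rs. stone_hat a \<times> stone_hat b) \<in> FP"
proof (induction rs)
  case Nil thus ?case using empty_fp by simp
next
  case (Cons r rs)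
  obtain a b where r: "r = (a, b)" by (cases r)
  have "(\<Union>(a, b)\<in>set (r # rs). stone_hat a \<times> stone_hat b)
      = (stone_hat a \<times> stone_hat b) \<union> (\<Union>(a, b)\<in>set rs. stone_hat a \<times> stone_hat b)" using r by simp
  thus ?case using fp_Un[OF rect_in_fp Cons.IH] by simp
qed

lemma rects_span: "cH (\<Union>(a, b)\<in>set rs. stone_hat a \<times> stone_hat b) \<in> span (range (case_prod rho))"
proof (induction "length rs" arbitrary: rs rule: less_induct)
  case less
  show ?case
  proof (cases rs)
    case Nil thus ?thesis by (simp add: cH_empty span_zero)
  next
    case (Cons r rs')
    obtain a b where r: "r = (a, b)" by (cases r)
    let ?R = "stone_hat a \<times> stone_hat b"
    let ?U = "\<Union>(a, b)\<in>set rs'. stone_hat a \<times> stone_hat b"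
    define rs'' where "rs'' = map (\<lambda>(a', b'). (inf a a', inf b b')) rs'"
    have U: "?U \<in> FP" by (rule rects_fp)
    have RU: "?R \<inter> ?U = (\<Union>(a, b)\<in>set rs''. stone_hat a \<times> stone_hat b)"
      unfolding rs''_def by (auto simp: hat_inf)
    have "cH (?R \<union> ?U) = cH ?R + cH ?U - cH (?R \<inter> ?U)"
      using cH_add[OF rect_in_fp U] by (simp add: algebra_simps)
    moreover have "cH ?R \<in> span (range (case_prod rho))"
    proof (rule span_base)
      have "cH ?R = case_prod rho (a, b)" by (simp add: rho_def)
      thus "cH ?R \<in> range (case_prod rho)" by (rule range_eqI)
    qed
    moreover have "cH ?U \<in> span (range (case_prod rho))" using less[of rs'] Cons by simp
    moreover have "cH (?R \<inter> ?U) \<in> span (range (case_prod rho))"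
      unfolding RU using less[of rs''] Cons by (simp add: rs''_def)
    ultimately have "cH (?R \<union> ?U) \<in> span (range (case_prod rho))"
      by (simp add: span_add span_diff)
    moreover have "(\<Union>(a, b)\<in>set rs. stone_hat a \<times> stone_hat b) = ?R \<union> ?U" using Cons r by simp
    ultimately show ?thesis by simp
  qed
qed

lemma rho_span: "span (range (case_prod rho)) = UNIV"
proof -
  have "components eH \<subseteq> span (range (case_prod rho))"
  proof
    fix x assume "x \<in> components eH"
    then obtain W where W: "W \<in> FP" "x = cH W" using cH_range by blast
    then obtain rs :: "('a \<times> 'b) list" where "W = (\<Union>(a, b)\<in>set rs. stone_hat a \<times> stone_hat b)"
      using fp_decomp by blast
    thus "x \<in> span (range (case_prod rho))" using W rects_span by simp
  qed
  hence "span (components eH) \<subseteq> span (range (case_prod rho))"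
    by (metis span_mono span_span)
  thus ?thesis using spH by auto
qed

end


lemma lin_add2: "linear f \<Longrightarrow> linear g \<Longrightarrow> linear (\<lambda>x. f x + g x)"
  by (rule linearI) (simp_all add: linear_add linear_scale scaleR_add_right)

lemma lin_scale2: "linear f \<Longrightarrow> linear (\<lambda>x. c *\<^sub>R f x)"
  by (rule linearI) (simp_all add: linear_add linear_scale scaleR_add_right)

lemma lin_zero2: "linear (\<lambda>x. 0)"
  by (rule linearI) simp_all

lemma bim_lin1: "riesz_bimorphism \<psi> \<Longrightarrow> linear (\<lambda>x. \<psi> x y)"
  by (simp add: riesz_bimorphism_def)

lemma bim_lin2: "riesz_bimorphism \<psi> \<Longrightarrow> linear (\<psi> x)"
  by (simp add: riesz_bimorphism_def)

lemma bim_hom1: "riesz_bimorphism \<psi> \<Longrightarrow> 0 \<le> y \<Longrightarrow> riesz_hom (\<lambda>x. \<psi> x y)"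
  by (simp add: riesz_bimorphism_def)

lemma bim_hom2: "riesz_bimorphism \<psi> \<Longrightarrow> 0 \<le> x \<Longrightarrow> riesz_hom (\<psi> x)"
  by (simp add: riesz_bimorphism_def)

lemma bim_pos: "riesz_bimorphism \<psi> \<Longrightarrow> 0 \<le> x \<Longrightarrow> 0 \<le> y \<Longrightarrow> 0 \<le> \<psi> x y"
  using riesz_hom_pos bim_hom2 by blast

lemma bim_zero1: "riesz_bimorphism \<psi> \<Longrightarrow> \<psi> 0 y = 0"
  using linear_0[OF bim_lin1] by blast

lemma bim_zero2: "riesz_bimorphism \<psi> \<Longrightarrow> \<psi> x 0 = 0"
  using linear_0[OF bim_lin2] by blast

lemma bim_disj1:
  assumes b: "riesz_bimorphism \<psi>" and p: "0 \<le> p" "0 \<le> p'" "inf p p' = 0"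
    and q: "0 \<le> q" "q \<le> f" "0 \<le> q'" "q' \<le> f"
  shows "inf (\<psi> p q) (\<psi> p' q') = 0"
proof (rule antisym)
  have f: "0 \<le> f" using q by (meson order_trans)
  have "inf (\<psi> p q) (\<psi> p' q') \<le> inf (\<psi> p f) (\<psi> p' f)"
    by (intro inf_mono riesz_hom_mono[OF bim_hom2[OF b]]) (use p q in auto)
  also have "\<dots> = \<psi> (inf p p') f" using riesz_hom_inf[OF bim_hom1[OF b f]] by metis
  also have "\<dots> = 0" using p(3) bim_zero1[OF b] by simp
  finally show "inf (\<psi> p q) (\<psi> p' q') \<le> 0" .
  show "0 \<le> inf (\<psi> p q) (\<psi> p' q')" using bim_pos[OF b] p q by simp
qed

lemma bim_disj2:
  assumes b: "riesz_bimorphism \<psi>" and q: "0 \<le> q" "0 \<le> q'" "inf q q' = 0"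
    and p: "0 \<le> p" "p \<le> f" "0 \<le> p'" "p' \<le> f"
  shows "inf (\<psi> p q) (\<psi> p' q') = 0"
proof (rule antisym)
  have f: "0 \<le> f" using p by (meson order_trans)
  have "inf (\<psi> p q) (\<psi> p' q') \<le> inf (\<psi> f q) (\<psi> f q')"
    by (intro inf_mono riesz_hom_mono[OF bim_hom1[OF b]]) (use p q in auto)
  also have "\<dots> = \<psi> f (inf q q')" using riesz_hom_inf[OF bim_hom2[OF b f]] by metis
  also have "\<dots> = 0" using q(3) bim_zero2[OF b] by simp
  finally show "inf (\<psi> p q) (\<psi> p' q') \<le> 0" .
  show "0 \<le> inf (\<psi> p q) (\<psi> p' q')" using bim_pos[OF b] p q by simp
qed

theorem theorem2p1:
  fixes tp :: "'e::archimedean_riesz_space \<Rightarrow> 'f::archimedean_riesz_space \<Rightarrow> 'g::archimedean_riesz_space"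
  assumes "is_caratheodory_space_of_type TYPE('e) TYPE('a::boolean_algebra)"
    and "is_caratheodory_space_of_type TYPE('f) TYPE('b::boolean_algebra)"
    and "riesz_bimorphism tp"
    and "fremlin_universal TYPE('g) tp"
    and "fremlin_universal TYPE('h::archimedean_riesz_space) tp"
    and "is_caratheodory_space_of_free_product TYPE('h) TYPE('a) TYPE('b)"
  shows "\<exists>T :: 'g \<Rightarrow> 'h. riesz_iso T"
proof -
  note tpb = assms(3)
  obtain eE and cA :: "'a \<Rightarrow> 'e" where cA: "cara eE cA"
    using assms(1) unfolding is_caratheodory_space_def cara_def by blast
  obtain eF and cB :: "'b \<Rightarrow> 'f" where cB: "cara eF cB"
    using assms(2) unfolding is_caratheodory_space_def cara_def by blast
  obtain eH :: 'h and cH where bi: "bool_iso (free_product TYPE('a) TYPE('b)) (\<union>) (\<inter>)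
       (\<lambda>S. topspace (free_prod_topology TYPE('a) TYPE('b)) - S) {} (topspace (free_prod_topology TYPE('a) TYPE('b)))
       (components eH) sup inf (\<lambda>x. eH - x) 0 eH cH" and spH: "span (components eH) = UNIV"
    using assms(6) unfolding is_caratheodory_space_of_free_product_def is_caratheodory_space_def by blast
  define R where "R a b = rho cH a b" for a b
  have R_pos: "0 \<le> R a b" for a b unfolding R_def by (rule rho_pos[OF bi spH])
  have R_inf: "inf (R a b) (R a' b') = R (inf a a') (inf b b')" for a b a' b'
    unfolding R_def by (rule rho_inf[OF bi spH])
  have R_bot1: "R bot b = 0" for b unfolding R_def by (rule rho_bot1[OF bi spH])
  have R_bot2: "R a bot = 0" for a unfolding R_def by (rule rho_bot2[OF bi spH])
  have R_badd1: "badd (\<lambda>a. R a b)" for b unfolding R_def by (rule rho_badd1[OF bi spH])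
  have R_badd2: "badd (\<lambda>b. R a b)" for a unfolding R_def by (rule rho_badd2[OF bi spH])
  have R_zero: "R a b = 0 \<Longrightarrow> a = bot \<or> b = bot" for a b unfolding R_def by (rule rho_zero[OF bi spH])
  have R_span: "span (range (case_prod R)) = UNIV" unfolding R_def using rho_span[OF bi spH] by simp
  define Phi where "Phi b = (SOME S. linear S \<and> (\<forall>a. S (cA a) = R a b))" for b
  have Phi: "linear (Phi b) \<and> (\<forall>a. Phi b (cA a) = R a b)" for b
  proof -
    have "\<exists>S. linear S \<and> (\<forall>a. S (cA a) = R a b)" by (rule cara_ext[OF cA R_badd1])
    thus ?thesis unfolding Phi_def by (rule someI_ex)
  qed
  have Phi_lin: "linear (Phi b)" and Phi_cA: "Phi b (cA a) = R a b" for a b using Phi by auto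
  have Phi_hom: "riesz_hom (Phi b)" for b
  proof (rule cara_riesz[OF cA Phi_lin])
    show "0 \<le> Phi b (cA a)" for a using R_pos by (simp add: Phi_cA)
    show "inf (Phi b (cA a)) (Phi b (cA a')) = 0" if "inf a a' = bot" for a a'
      using that by (simp add: Phi_cA R_inf R_bot1)
  qed
  have Phi_add: "Phi (sup b b') x = Phi b x + Phi b' x" if "inf b b' = bot" for b b' x
  proof -
    have "Phi (sup b b') = (\<lambda>x. Phi b x + Phi b' x)"
    proof (rule cara_lin_eq[OF cA Phi_lin lin_add2[OF Phi_lin Phi_lin]])
      show "Phi (sup b b') (cA a) = Phi b (cA a) + Phi b' (cA a)" for a
        using R_badd2[of a] that unfolding badd_def by (simp add: Phi_cA)
    qed
    thus ?thesis by simp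
  qed
  have Phi_bot: "Phi bot x = 0" for x
  proof -
    have "Phi bot = (\<lambda>x. 0)"
      by (rule cara_lin_eq[OF cA Phi_lin lin_zero2]) (simp add: Phi_cA R_bot2)
    thus ?thesis by simp
  qed
  define phi where "phi x = (SOME S. linear S \<and> (\<forall>b. S (cB b) = Phi b x))" for x
  have phi: "linear (phi x) \<and> (\<forall>b. phi x (cB b) = Phi b x)" for x
  proof -
    have "badd (\<lambda>b. Phi b x)" unfolding badd_def using Phi_add by blast
    hence "\<exists>S. linear S \<and> (\<forall>b. S (cB b) = Phi b x)" by (rule cara_ext[OF cB])
    thus ?thesis unfolding phi_def by (rule someI_ex)
  qed
  have phi_lin2: "linear (phi x)" and phi_cB: "phi x (cB b) = Phi b x" for x b using phi by auto
  have phi_cc: "phi (cA a) (cB b) = R a b" for a b by (simp add: phi_cB Phi_cA)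
  have phi_add: "phi (x1 + x2) y = phi x1 y + phi x2 y" for x1 x2 y
  proof -
    have "phi (x1 + x2) = (\<lambda>y. phi x1 y + phi x2 y)"
      by (rule cara_lin_eq[OF cB phi_lin2 lin_add2[OF phi_lin2 phi_lin2]])
         (simp add: phi_cB linear_add[OF Phi_lin])
    thus ?thesis by simp
  qed
  have phi_scale: "phi (c *\<^sub>R x) y = c *\<^sub>R phi x y" for c x y
  proof -
    have "phi (c *\<^sub>R x) = (\<lambda>y. c *\<^sub>R phi x y)"
      by (rule cara_lin_eq[OF cB phi_lin2 lin_scale2[OF phi_lin2]])
         (simp add: phi_cB linear_scale[OF Phi_lin])
    thus ?thesis by simp
  qed
  have phi_lin1: "linear (\<lambda>x. phi x y)" for y
    by (rule linearI) (simp_all add: phi_add phi_scale)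
  have phi_hom2: "riesz_hom (phi x)" if x: "0 \<le> x" for x
  proof (rule cara_riesz[OF cB phi_lin2])
    show "0 \<le> phi x (cB b)" for b
      using riesz_hom_pos[OF Phi_hom x] by (simp add: phi_cB)
    show "inf (phi x (cB b)) (phi x (cB b')) = 0" if bb: "inf b b' = bot" for b b'
    proof (rule antisym)
      obtain c where c: "0 \<le> c" "x \<le> c *\<^sub>R eE" using cara_bound[OF cA] by blast
      have "Phi b x \<le> Phi b (c *\<^sub>R eE)" for b by (rule riesz_hom_mono[OF Phi_hom c(2)])
      also have "Phi b (c *\<^sub>R eE) = c *\<^sub>R R top b" for b
        using linear_scale[OF Phi_lin, of b c eE] cara_top[OF cA] Phi_cA[of b top] by simp
      finally have le: "Phi b x \<le> c *\<^sub>R R top b" for b .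
      have "inf (phi x (cB b)) (phi x (cB b')) \<le> inf (c *\<^sub>R R top b) (c *\<^sub>R R top b')"
        unfolding phi_cB by (intro inf_mono le)
      also have "\<dots> = c *\<^sub>R R top (inf b b')"
        using scaleR_inf[OF c(1), of "R top b" "R top b'"] R_inf[of top b top b'] by simp
      also have "\<dots> = 0" using bb R_bot2 by simp
      finally show "inf (phi x (cB b)) (phi x (cB b')) \<le> 0" .
      show "0 \<le> inf (phi x (cB b)) (phi x (cB b'))"
        using riesz_hom_pos[OF Phi_hom x] by (simp add: phi_cB)
    qed
  qed
  have phi_hom1: "riesz_hom (\<lambda>x. phi x y)" if y: "0 \<le> y" for y
  proof (rule cara_riesz[OF cA phi_lin1])
    show "0 \<le> phi (cA a) y" for a
      using riesz_hom_pos[OF phi_hom2[OF cara_pos[OF cA]] y] .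
    show "inf (phi (cA a) y) (phi (cA a') y) = 0" if aa: "inf a a' = bot" for a a'
    proof (rule antisym)
      obtain c where c: "0 \<le> c" "y \<le> c *\<^sub>R eF" using cara_bound[OF cB] by blast
      have "phi (cA a) y \<le> phi (cA a) (c *\<^sub>R eF)" for a
        by (rule riesz_hom_mono[OF phi_hom2[OF cara_pos[OF cA]] c(2)])
      also have "phi (cA a) (c *\<^sub>R eF) = c *\<^sub>R R a top" for a
        using linear_scale[OF phi_lin2, of "cA a" c eF] cara_top[OF cB] phi_cc[of a top] by simp
      finally have le: "phi (cA a) y \<le> c *\<^sub>R R a top" for a .
      have "inf (phi (cA a) y) (phi (cA a') y) \<le> inf (c *\<^sub>R R a top) (c *\<^sub>R R a' top)"
        by (intro inf_mono le)
      also have "\<dots> = c *\<^sub>R R (inf a a') top"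
        using scaleR_inf[OF c(1), of "R a top" "R a' top"] R_inf[of a top a' top] by simp
      also have "\<dots> = 0" using aa R_bot1 by simp
      finally show "inf (phi (cA a) y) (phi (cA a') y) \<le> 0" .
      show "0 \<le> inf (phi (cA a) y) (phi (cA a') y)"
        using riesz_hom_pos[OF phi_hom2[OF cara_pos[OF cA]] y] by simp
    qed
  qed
  have phi_bim: "riesz_bimorphism phi"
    unfolding riesz_bimorphism_def using phi_lin1 phi_lin2 phi_hom1 phi_hom2 by blast
  have u5: "\<forall>\<psi> :: 'e \<Rightarrow> 'f \<Rightarrow> 'h. riesz_bimorphism \<psi> \<longrightarrow>
        (\<exists>!T :: 'g \<Rightarrow> 'h. riesz_hom T \<and> (\<forall>x y. T (tp x y) = \<psi> x y))"
    using assms(5) unfolding fremlin_universal_def .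
  have ex1: "\<exists>!T :: 'g \<Rightarrow> 'h. riesz_hom T \<and> (\<forall>x y. T (tp x y) = phi x y)"
    using mp[OF spec[OF u5, of phi] phi_bim] .
  obtain T :: "'g \<Rightarrow> 'h" where T0: "riesz_hom T \<and> (\<forall>x y. T (tp x y) = phi x y)"
    using ex1_implies_ex[OF ex1] by (rule exE)
  have T: "riesz_hom T" "\<And>x y. T (tp x y) = phi x y" using T0 by auto
  have tp_badd1: "badd (\<lambda>a. tp (cA a) (cB b))" for b
    unfolding badd_def
  proof (intro allI impI)
    fix x y :: 'a assume "inf x y = bot"
    hence "cA (sup x y) = cA x + cA y" using cara_badd[OF cA] unfolding badd_def by blast
    thus "tp (cA (sup x y)) (cB b) = tp (cA x) (cB b) + tp (cA y) (cB b)"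
      by (simp add: linear_add[OF bim_lin1[OF tpb]])
  qed
  have tp_badd2: "badd (\<lambda>b. tp (cA a) (cB b))" for a
    unfolding badd_def
  proof (intro allI impI)
    fix x y :: 'b assume "inf x y = bot"
    hence "cB (sup x y) = cB x + cB y" using cara_badd[OF cB] unfolding badd_def by blast
    thus "tp (cA a) (cB (sup x y)) = tp (cA a) (cB x) + tp (cA a) (cB y)"
      by (simp add: linear_add[OF bim_lin2[OF tpb]])
  qed
  define uu where "uu ss ts k = R (atm ss (fst k)) (atm ts (snd k))" for ss ts and k :: "bool list \<times> bool list"
  define vv where "vv ss ts k = tp (cA (atm ss (fst k))) (cB (atm ts (snd k)))" for ss ts and k :: "bool list \<times> bool list"
  define MM where "MM ss ts r k = coefm ss (fst r) (fst k) * coefm ts (snd r) (snd k)"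
    for ss ts and r :: "'a \<times> 'b" and k :: "bool list \<times> bool list"
  define CC where "CC ss ts = vecs (length ss) \<times> vecs (length ts)" for ss :: "'a list" and ts :: "'b list"
  have CC_fin: "finite (CC ss ts)" for ss ts by (simp add: CC_def)
  have diff_cases: "(fst k \<noteq> fst k' \<and> inf (atm ss (fst k)) (atm ss (fst k')) = bot)
      \<or> (snd k \<noteq> snd k' \<and> inf (atm ts (snd k)) (atm ts (snd k')) = bot)"
    if "k \<in> CC ss ts" "k' \<in> CC ss ts" "k \<noteq> k'" for ss ts k k'
  proof (cases "fst k = fst k'")
    case True
    hence "snd k \<noteq> snd k'" using that(3) by (simp add: prod_eq_iff)
    moreover have "inf (atm ts (snd k)) (atm ts (snd k')) = bot" if "snd k \<noteq> snd k'"
      by (rule atm_disj) (use \<open>k \<in> CC ss ts\<close> \<open>k' \<in> CC ss ts\<close> that in \<open>auto simp: CC_def vecs_def\<close>)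
    ultimately show ?thesis by blast
  next
    case False
    moreover have "inf (atm ss (fst k)) (atm ss (fst k')) = bot"
      by (rule atm_disj) (use that False in \<open>auto simp: CC_def vecs_def\<close>)
    ultimately show ?thesis by blast
  qed
  have d_u: "disj_fam (CC ss ts) (uu ss ts)" for ss ts
    unfolding disj_fam_def
  proof (intro conjI ballI impI)
    fix k show "0 \<le> uu ss ts k" unfolding uu_def by (rule R_pos)
  next
    fix k k' assume kk: "k \<in> CC ss ts" "k' \<in> CC ss ts" "k \<noteq> k'"
    show "inf (uu ss ts k) (uu ss ts k') = 0"
      using diff_cases[OF kk] unfolding uu_def R_inf by (auto simp: R_bot1 R_bot2)
  qed
  have d_v: "disj_fam (CC ss ts) (vv ss ts)" for ss ts
    unfolding disj_fam_def
  proof (intro conjI ballI impI)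
    fix k show "0 \<le> vv ss ts k" unfolding vv_def by (rule bim_pos[OF tpb cara_pos[OF cA] cara_pos[OF cB]])
  next
    fix k k' assume kk: "k \<in> CC ss ts" "k' \<in> CC ss ts" "k \<noteq> k'"
    from diff_cases[OF kk] show "inf (vv ss ts k) (vv ss ts k') = 0"
    proof
      assume h: "fst k \<noteq> fst k' \<and> inf (atm ss (fst k)) (atm ss (fst k')) = bot"
      show ?thesis unfolding vv_def
        by (rule bim_disj1[OF tpb cara_pos[OF cA] cara_pos[OF cA] _ cara_pos[OF cB] cara_le[OF cB] cara_pos[OF cB] cara_le[OF cB]])
           (use h in \<open>simp add: cara_inf[OF cA, symmetric] cara_bot[OF cA]\<close>)
    next
      assume h: "snd k \<noteq> snd k' \<and> inf (atm ts (snd k)) (atm ts (snd k')) = bot"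
      show ?thesis unfolding vv_def
        by (rule bim_disj2[OF tpb cara_pos[OF cB] cara_pos[OF cB] _ cara_pos[OF cA] cara_le[OF cA] cara_pos[OF cA] cara_le[OF cA]])
           (use h in \<open>simp add: cara_inf[OF cB, symmetric] cara_bot[OF cB]\<close>)
    qed
  qed
  have uv: "uu ss ts k = 0 \<Longrightarrow> vv ss ts k = 0" for ss ts k
    unfolding uu_def vv_def using R_zero cara_bot[OF cA] cara_bot[OF cB] bim_zero1[OF tpb] bim_zero2[OF tpb] by metis
  have eR: "case_prod R r = (\<Sum>k\<in>CC ss ts. MM ss ts r k *\<^sub>R uu ss ts k)"
    if "fst r \<in> set ss" "snd r \<in> set ts" for ss ts r
    using badd2_rep[OF R_badd1 R_badd2 that] unfolding CC_def MM_def uu_def by (simp add: case_prod_beta)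
  have eT: "case_prod (\<lambda>a b. tp (cA a) (cB b)) r = (\<Sum>k\<in>CC ss ts. MM ss ts r k *\<^sub>R vv ss ts k)"
    if "fst r \<in> set ss" "snd r \<in> set ts" for ss ts r
    using badd2_rep[OF tp_badd1 tp_badd2 that] unfolding CC_def MM_def vv_def by (simp add: case_prod_beta)
  have lists: "\<exists>ss ts. fst ` F \<subseteq> set ss \<and> snd ` F \<subseteq> set ts" if Ffin: "finite F" for F :: "('a \<times> 'b) set"
  proof -
    obtain ss where "set ss = fst ` F" using finite_list[of "fst ` F"] Ffin by blast
    moreover obtain ts where "set ts = snd ` F" using finite_list[of "snd ` F"] Ffin by blast
    ultimately show ?thesis by blast
  qed
  have "\<exists>S. linear S \<and> (\<forall>r. S (case_prod R r) = case_prod (\<lambda>a b. tp (cA a) (cB b)) r)"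
  proof (rule gu_exists[OF R_span])
    fix F :: "('a \<times> 'b) set" assume F: "finite F"
    then obtain ss ts where st: "fst ` F \<subseteq> set ss" "snd ` F \<subseteq> set ts" using lists by blast
    show "\<exists>(C::(bool list \<times> bool list) set) M u v. finite C \<and> disj_fam C u \<and> (\<forall>k\<in>C. u k = 0 \<longrightarrow> v k = 0)
        \<and> (\<forall>r\<in>F. case_prod R r = (\<Sum>k\<in>C. M r k *\<^sub>R u k)
             \<and> case_prod (\<lambda>a b. tp (cA a) (cB b)) r = (\<Sum>k\<in>C. M r k *\<^sub>R v k))"
    proof (intro exI conjI ballI impI)
      show "finite (CC ss ts)" by (rule CC_fin)
      show "disj_fam (CC ss ts) (uu ss ts)" by (rule d_u)
      show "vv ss ts k = 0" if "k \<in> CC ss ts" "uu ss ts k = 0" for k using uv that(2) .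
      fix r assume "r \<in> F"
      hence r: "fst r \<in> set ss" "snd r \<in> set ts" using st by auto
      show "case_prod R r = (\<Sum>k\<in>CC ss ts. MM ss ts r k *\<^sub>R uu ss ts k)" by (rule eR[OF r])
      show "case_prod (\<lambda>a b. tp (cA a) (cB b)) r = (\<Sum>k\<in>CC ss ts. MM ss ts r k *\<^sub>R vv ss ts k)"
        by (rule eT[OF r])
    qed
  qed
  then obtain S :: "'h \<Rightarrow> 'g" where S0: "linear S \<and> (\<forall>r. S (case_prod R r) = case_prod (\<lambda>a b. tp (cA a) (cB b)) r)"
    by (rule exE)
  have S_lin: "linear S" and S_R0: "\<And>r. S (case_prod R r) = case_prod (\<lambda>a b. tp (cA a) (cB b)) r"
    using S0 by auto
  have S_R: "S (R a b) = tp (cA a) (cB b)" for a b using S_R0[of "(a, b)"] by simp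
  have S_hom: "riesz_hom S"
  proof (rule riesz_hom_by_rep[OF S_lin])
    fix x
    show "\<exists>(C::(bool list \<times> bool list) set) u c. finite C \<and> (disj_fam C u \<and> disj_fam C (\<lambda>k. S (u k)))
          \<and> x = (\<Sum>k\<in>C. c k *\<^sub>R u k)"
    proof (rule rep_from_refine[OF R_span, where P="\<lambda>C u. disj_fam C u \<and> disj_fam C (\<lambda>k. S (u k))"])
      fix F :: "('a \<times> 'b) set" assume F: "finite F"
      then obtain ss ts where st: "fst ` F \<subseteq> set ss" "snd ` F \<subseteq> set ts" using lists by blast
      have Su: "(\<lambda>k. S (uu ss ts k)) = vv ss ts" unfolding uu_def vv_def by (simp add: S_R)
      show "\<exists>(C::(bool list \<times> bool list) set) M u. finite C \<and> (disj_fam C u \<and> disj_fam C (\<lambda>k. S (u k)))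
          \<and> (\<forall>r\<in>F. case_prod R r = (\<Sum>k\<in>C. M r k *\<^sub>R u k))"
      proof (intro exI conjI ballI)
        show "finite (CC ss ts)" by (rule CC_fin)
        show "disj_fam (CC ss ts) (uu ss ts)" by (rule d_u)
        show "disj_fam (CC ss ts) (\<lambda>k. S (uu ss ts k))" unfolding Su by (rule d_v)
        fix r assume "r \<in> F"
        hence r: "fst r \<in> set ss" "snd r \<in> set ts" using st by auto
        show "case_prod R r = (\<Sum>k\<in>CC ss ts. MM ss ts r k *\<^sub>R uu ss ts k)" by (rule eR[OF r])
      qed
    qed
  qed
  have SP1: "(\<lambda>y. S (phi (cA a) y)) = tp (cA a)" for a
  proof (rule cara_lin_eq[OF cB])
    show "linear (\<lambda>y. S (phi (cA a) y))" using linear_compose[OF phi_lin2 S_lin] by (simp add: o_def)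
    show "linear (tp (cA a))" by (rule bim_lin2[OF tpb])
    show "S (phi (cA a) (cB b)) = tp (cA a) (cB b)" for b by (simp add: phi_cc S_R)
  qed
  have SP2: "(\<lambda>x. S (phi x y)) = (\<lambda>x. tp x y)" for y
  proof (rule cara_lin_eq[OF cA])
    show "linear (\<lambda>x. S (phi x y))" using linear_compose[OF phi_lin1 S_lin] by (simp add: o_def)
    show "linear (\<lambda>x. tp x y)" by (rule bim_lin1[OF tpb])
    show "S (phi (cA a) y) = tp (cA a) y" for a using fun_cong[OF SP1[of a], of y] by simp
  qed
  have SP: "S (phi x y) = tp x y" for x y using fun_cong[OF SP2[of y], of x] by simp
  have u4: "\<forall>\<psi> :: 'e \<Rightarrow> 'f \<Rightarrow> 'g. riesz_bimorphism \<psi> \<longrightarrow>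
        (\<exists>!T :: 'g \<Rightarrow> 'g. riesz_hom T \<and> (\<forall>x y. T (tp x y) = \<psi> x y))"
    using assms(4) unfolding fremlin_universal_def .
  have ex1g: "\<exists>!T :: 'g \<Rightarrow> 'g. riesz_hom T \<and> (\<forall>x y. T (tp x y) = tp x y)"
    using mp[OF spec[OF u4, of tp] tpb] .
  have h1: "riesz_hom (S \<circ> T) \<and> (\<forall>x y. (S \<circ> T) (tp x y) = tp x y)"
    using riesz_hom_comp[OF S_hom T(1)] T(2) SP by simp
  have h2: "riesz_hom id \<and> (\<forall>x y. id (tp x y) = tp x y)"
    using riesz_hom_id by simp
  have ST: "S \<circ> T = id"
  proof -
    obtain T0 where "riesz_hom T0 \<and> (\<forall>x y. T0 (tp x y) = tp x y)"
      and uq: "\<And>T'. riesz_hom T' \<and> (\<forall>x y. T' (tp x y) = tp x y) \<Longrightarrow> T' = T0"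
      using ex1g by (elim ex1E) blast
    show ?thesis using uq[OF h1] uq[OF h2] by simp
  qed
  have TS: "T \<circ> S = id"
  proof (rule lin_eq[OF linear_compose[OF S_lin riesz_hom_linear[OF T(1)]] linear_id R_span])
    fix h assume "h \<in> range (case_prod R)"
    then obtain a b where h: "h = R a b" by auto
    show "(T \<circ> S) h = id h" unfolding h by (simp add: S_R T(2) phi_cc)
  qed
  have "bij T" by (rule o_bij[OF ST TS])
  hence "riesz_iso T" using T(1) by (simp add: riesz_iso_def)
  thus ?thesis by blast
qed


end
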